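(* Let $\mathcal R$ be a super-algebra and let $M=(M^i_a)_{i\in I,a\in\widetilde I}$ be a family of homogeneous elements $M^i_a\in\mathcal R$ with parities $[M^i_a]=\bar k_i+\bar l_a$. The following are equivalent: (i) for all $s,t\in I$ and $c,d\in\widetilde I$, $\sum_{i,j\in I}\sum_{a,b\in\widetilde I}(-1)^{(\bar k_i+\bar l_a)\bar k_j}B^{st}_{ij}M^i_aM^j_b\widetilde S^{ab}_{cd}=0$ (equivalently, $BM^{(1)}M^{(2)}(1-\widetilde B)=0$ for the operator $M\colon\widetilde W\to W\otimes\mathcal R$, $M\widetilde e_a=\sum_ie_iM^i_a$); (ii) the assignment $f_M(x^i)=\sum_{a\in\widetilde I}M^i_a\widetilde x^a$ extends to a (unique) morphism of $\mathbb N_0$-graded super-algebras $f_M\colon\mathfrak X_B(\mathbb K)\to\mathfrak X_{\widetilde B}(\mathcal R)$; (iii) the assignment $f^M(\widetilde\psi_a)=\sum_{i\in I}\psi_iM^i_a$ extends to a (unique) morphism of $\mathbb N_0$-graded super-algebras $f^M\colon\Xi_{\widetilde B}(\mathbb K)\to\Xi_B(\mathcal R)$. (A matrix satisfying these conditions is called a $(B,\widetilde B)$-Manin matrix.)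
   Context: $\mathbb K$ is an infinite field, $\mathrm{char}\,\mathbb K\ne2$. Let $W,\widetilde W$ be finite-dimensional $\mathbb Z_2$-graded vector spaces with homogeneous bases $(e_i)_{i\in I}$, $(\widetilde e_a)_{a\in\widetilde I}$, parities $[e_i]=\bar k_i$, $[\widetilde e_a]=\bar l_a$. Let $B$ be an even idempotent operator on $W\otimes W$ with entries $B(e_i\otimes e_j)=\sum_{s,t\in I}B^{st}_{ij}e_s\otimes e_t$, $S=1-B$, $S^{st}_{ij}=\delta^s_i\delta^t_j-B^{st}_{ij}$; similarly $\widetilde B$ an even idempotent on $\widetilde W\otimes\widetilde W$ with entries $\widetilde B^{ab}_{cd}$ and $\widetilde S^{ab}_{cd}=\delta^a_c\delta^b_d-\widetilde B^{ab}_{cd}$. $\mathfrak X_B(\mathbb K)$ is the $\mathbb N_0$-graded super-algebra generated by degree-one $x^i$ ($i\in I$) of parity $\bar k_i$ with relations $\sum_{i,j}(-1)^{\bar k_i\bar k_j}B^{st}_{ij}x^ix^j=0$ ($s,t\in I$); $\Xi_B(\mathbb K)$ is generated by degree-one $\psi_i$ of parity $\bar k_i$ with relations $\sum_{s,t}S^{st}_{ij}\psi_s\psi_t=0$ ($i,j\in I$). Analogously $\mathfrak X_{\widetilde B}(\mathbb K)$, $\Xi_{\widetilde B}(\mathbb K)$ with generators $\widetilde x^a$, $\widetilde\psi_a$ of parity $\bar l_a$. For a super-algebra $\mathcal R$, $\mathfrak X_B(\mathcal R)=\mathcal R\otimes\mathfrak X_B(\mathbb K)$, $\Xi_B(\mathcal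 R)=\mathcal R\otimes\Xi_B(\mathbb K)$ (super tensor product of algebras, multiplication $(a\otimes b)(c\otimes d)=(-1)^{[b][c]}ac\otimes bd$, with $\mathcal R$ in degree 0; elements $r\otimes y$ written $ry$). In (i), $M^{(1)},M^{(2)}$ denote $M$ acting in the first/second tensor factor with Koszul signs; the entrywise form of the operator condition is exactly the displayed sum. *)

theory Defs
  imports Main "HOL-Library.Function_Algebras"
begin

text \<open>Parities are booleans (True = odd); addition of parities is (\<noteq>).\<close>

definition sgnb :: "bool \<Rightarrow> 'a::ring_1" where
  "sgnb b = (if b then -1 else 1)"

definition wpar :: "('g \<Rightarrow> bool) \<Rightarrow> 'g list \<Rightarrow> bool" where
  "wpar p w = odd (length (filter p w))"

definition homog :: "'r set \<Rightarrow> 'r set \<Rightarrow> bool \<Rightarrow> 'r \<Rightarrow> bool" where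
  "homog Ev Od b r = (if b then r \<in> Od else r \<in> Ev)"

text \<open>A (unital associative) super-algebra over the field 'k: a ring R with a central
  ring homomorphism sc : K -> R (the K-algebra structure) and a decomposition
  R = Ev (+) Od into K-subspaces with Ev Ev, Od Od \<subseteq> Ev and Ev Od, Od Ev \<subseteq> Od.\<close>
definition super_algebra :: "('k::field \<Rightarrow> 'r::ring_1) \<Rightarrow> 'r set \<Rightarrow> 'r set \<Rightarrow> bool" where
  "super_algebra sc Ev Od \<longleftrightarrow>
     sc 1 = 1 \<and> (\<forall>a b. sc (a + b) = sc a + sc b) \<and> (\<forall>a b. sc (a * b) = sc a * sc b) \<and>
     (\<forall>a r. sc a * r = r * sc a) \<and>
     0 \<in> Ev \<and> 0 \<in> Od \<and>
     (\<forall>x\<in>Ev. \<forall>y\<in>Ev. x + y \<in> Ev) \<and> (\<forall>x\<in>Od. \<forall>y\<in>Od. x + y \<in> Od) \<and>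
     (\<forall>c. \<forall>x\<in>Ev. sc c * x \<in> Ev) \<and> (\<forall>c. \<forall>x\<in>Od. sc c * x \<in> Od) \<and>
     (\<forall>r. \<exists>!p. fst p \<in> Ev \<and> snd p \<in> Od \<and> r = fst p + snd p) \<and>
     (\<forall>x\<in>Ev. \<forall>y\<in>Ev. x * y \<in> Ev) \<and> (\<forall>x\<in>Ev. \<forall>y\<in>Od. x * y \<in> Od) \<and>
     (\<forall>x\<in>Od. \<forall>y\<in>Ev. x * y \<in> Od) \<and> (\<forall>x\<in>Od. \<forall>y\<in>Od. x * y \<in> Ev)"

definition gaut :: "'r set \<Rightarrow> 'r set \<Rightarrow> 'r \<Rightarrow> 'r::ring_1" where
  "gaut Ev Od r = (THE s. \<exists>e\<in>Ev. \<exists>f\<in>Od. r = e + f \<and> s = e - f)"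

text \<open>Elements of R \<otimes> T(V) (super tensor product of R with the free super-algebra
  on generators of type 'g with parities p) are finitely supported maps
  'g list \<Rightarrow> R (coefficient of each word).\<close>

definition finsupp :: "('g list \<Rightarrow> 'r::zero) \<Rightarrow> bool" where
  "finsupp P \<longleftrightarrow> finite {w. P w \<noteq> 0}"

definition st_one :: "'g list \<Rightarrow> 'r::ring_1" where
  "st_one = (\<lambda>w. if w = [] then 1 else 0)"

definition st_gen :: "'g \<Rightarrow> 'g list \<Rightarrow> 'r::ring_1" where
  "st_gen g = (\<lambda>w. if w = [g] then 1 else 0)"

definition st_scal :: "'r \<Rightarrow> 'g list \<Rightarrow> 'r::ring_1" where
  "st_scal r = (\<lambda>w. if w = [] then r else 0)"

definition st_smul :: "('k \<Rightarrow> 'r::ring_1) \<Rightarrow> 'k \<Rightarrow> ('g list \<Rightarrow> 'r) \<Rightarrow> 'g list \<Rightarrow> 'r" where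
  "st_smul sc c P = (\<lambda>w. sc c * P w)"

text \<open>Multiplication (r \<otimes> u)(r' \<otimes> v) = (-1)^([u][r']) r r' \<otimes> uv, written with the
  parity automorphism \<sigma> of R.\<close>
definition st_mult :: "('r \<Rightarrow> 'r) \<Rightarrow> ('g \<Rightarrow> bool) \<Rightarrow> ('g list \<Rightarrow> 'r::ring_1)
    \<Rightarrow> ('g list \<Rightarrow> 'r) \<Rightarrow> 'g list \<Rightarrow> 'r" where
  "st_mult \<sigma> p P Q = (\<lambda>w. \<Sum>n\<le>length w. P (take n w) *
      (if wpar p (take n w) then \<sigma> (Q (drop n w)) else Q (drop n w)))"

inductive_set st_ideal :: "('r \<Rightarrow> 'r) \<Rightarrow> ('g \<Rightarrow> bool) \<Rightarrow> ('g list \<Rightarrow> 'r::ring_1) set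
    \<Rightarrow> ('g list \<Rightarrow> 'r) set"
  for \<sigma> p G where
  gen: "q \<in> G \<Longrightarrow> q \<in> st_ideal \<sigma> p G"
| zero: "0 \<in> st_ideal \<sigma> p G"
| add: "x \<in> st_ideal \<sigma> p G \<Longrightarrow> y \<in> st_ideal \<sigma> p G \<Longrightarrow> x + y \<in> st_ideal \<sigma> p G"
| lmult: "finsupp a \<Longrightarrow> x \<in> st_ideal \<sigma> p G \<Longrightarrow> st_mult \<sigma> p a x \<in> st_ideal \<sigma> p G"
| rmult: "finsupp a \<Longrightarrow> x \<in> st_ideal \<sigma> p G \<Longrightarrow> st_mult \<sigma> p x a \<in> st_ideal \<sigma> p G"

text \<open>Entries B s t i j = B^{st}_{ij}.  Even idempotent operator on W \<otimes> W.\<close>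
definition even_idempotent :: "('g::finite \<Rightarrow> bool) \<Rightarrow> ('g \<Rightarrow> 'g \<Rightarrow> 'g \<Rightarrow> 'g \<Rightarrow> 'k::field) \<Rightarrow> bool" where
  "even_idempotent p B \<longleftrightarrow>
     (\<forall>s t i j. (\<Sum>u\<in>UNIV. \<Sum>v\<in>UNIV. B s t u v * B u v i j) = B s t i j) \<and>
     (\<forall>s t i j. B s t i j \<noteq> 0 \<longrightarrow> (p s \<noteq> p t) = (p i \<noteq> p j))"

definition Sop :: "('g \<Rightarrow> 'g \<Rightarrow> 'g \<Rightarrow> 'g \<Rightarrow> 'k::field) \<Rightarrow> 'g \<Rightarrow> 'g \<Rightarrow> 'g \<Rightarrow> 'g \<Rightarrow> 'k" where
  "Sop B s t i j = (if s = i \<and> t = j then 1 else 0) - B s t i j"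

definition X_rels :: "('k::field \<Rightarrow> 'r::ring_1) \<Rightarrow> ('r \<Rightarrow> 'r) \<Rightarrow> ('g::finite \<Rightarrow> bool)
    \<Rightarrow> ('g \<Rightarrow> 'g \<Rightarrow> 'g \<Rightarrow> 'g \<Rightarrow> 'k) \<Rightarrow> ('g list \<Rightarrow> 'r) set" where
  "X_rels sc \<sigma> p B = range (\<lambda>(s, t). \<Sum>i\<in>UNIV. \<Sum>j\<in>UNIV.
      st_smul sc (sgnb (p i \<and> p j) * B s t i j) (st_mult \<sigma> p (st_gen i) (st_gen j)))"

definition Xi_rels :: "('k::field \<Rightarrow> 'r::ring_1) \<Rightarrow> ('r \<Rightarrow> 'r) \<Rightarrow> ('g::finite \<Rightarrow> bool)
    \<Rightarrow> ('g \<Rightarrow> 'g \<Rightarrow> 'g \<Rightarrow> 'g \<Rightarrow> 'k) \<Rightarrow> ('g list \<Rightarrow> 'r) set" where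
  "Xi_rels sc \<sigma> p B = range (\<lambda>(i, j). \<Sum>s\<in>UNIV. \<Sum>t\<in>UNIV.
      st_smul sc (Sop B s t i j) (st_mult \<sigma> p (st_gen s) (st_gen t)))"

text \<open>A morphism of N0-graded super-algebras  K \<otimes> T(V1) / J1  \<rightarrow>  R \<otimes> T(V2) / J2,
  represented by a map F on representatives that respects the congruences and is a
  K-algebra homomorphism preserving degree and parity modulo J2.  The source has
  coefficients in K (purely even), so its parity automorphism is the identity.\<close>
definition qa_morphism ::
  "('g1 \<Rightarrow> bool) \<Rightarrow> ('g1 list \<Rightarrow> 'k::field) set \<Rightarrow>
   ('k \<Rightarrow> 'r::ring_1) \<Rightarrow> 'r set \<Rightarrow> 'r set \<Rightarrow> ('g2 \<Rightarrow> bool) \<Rightarrow> ('g2 list \<Rightarrow> 'r) set \<Rightarrow>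
   (('g1 list \<Rightarrow> 'k) \<Rightarrow> ('g2 list \<Rightarrow> 'r)) \<Rightarrow> bool" where
  "qa_morphism p1 J1 sc Ev Od p2 J2 F \<longleftrightarrow>
     (\<forall>P. finsupp P \<longrightarrow> finsupp (F P)) \<and>
     (\<forall>P Q. finsupp P \<and> finsupp Q \<and> P - Q \<in> J1 \<longrightarrow> F P - F Q \<in> J2) \<and>
     (\<forall>P Q. finsupp P \<and> finsupp Q \<longrightarrow> F (P + Q) - (F P + F Q) \<in> J2) \<and>
     (\<forall>c P. finsupp P \<longrightarrow> F (st_smul id c P) - st_smul sc c (F P) \<in> J2) \<and>
     (\<forall>P Q. finsupp P \<and> finsupp Q \<longrightarrow>
        F (st_mult id p1 P Q) - st_mult (gaut Ev Od) p2 (F P) (F Q) \<in> J2) \<and>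
     F st_one - st_one \<in> J2 \<and>
     (\<forall>P n. finsupp P \<and> (\<forall>w. P w \<noteq> 0 \<longrightarrow> length w = n) \<longrightarrow>
        (\<exists>Q. finsupp Q \<and> F P - Q \<in> J2 \<and> (\<forall>w. Q w \<noteq> 0 \<longrightarrow> length w = n))) \<and>
     (\<forall>P b. finsupp P \<and> (\<forall>w. P w \<noteq> 0 \<longrightarrow> wpar p1 w = b) \<longrightarrow>
        (\<exists>Q. finsupp Q \<and> F P - Q \<in> J2 \<and> (\<forall>w. homog Ev Od (b \<noteq> wpar p2 w) (Q w))))"

end

theory Submission
  imports Defs
begin


lemma sum_single:
  assumes "finite A" "a \<in> A" "\<And>i. i \<in> A \<Longrightarrow> i \<noteq> a \<Longrightarrow> g i = 0"
  shows "sum g A = g a"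
proof -
  have "sum g A = g a + sum g (A - {a})" using assms by (simp add: sum.remove)
  also have "sum g (A - {a}) = 0" using assms by (intro sum.neutral) auto
  finally show ?thesis by simp
qed

lemma wpar_Nil[simp]: "wpar p [] = False" by (simp add: wpar_def)
lemma wpar_Cons[simp]: "wpar p (x # w) = (p x \<noteq> wpar p w)" by (simp add: wpar_def)
lemma wpar_append: "wpar p (u @ v) = (wpar p u \<noteq> wpar p v)" by (induction u) auto

lemma sum_fun_apply: "(sum f S) w = sum (\<lambda>x. f x w) S"
  by (induction S rule: infinite_finite_induct) auto

lemma diff_fun_apply[simp]: "(P - Q) w = P w - Q w" by (simp add: fun_diff_def)
lemma neg_fun_apply[simp]: "(- P) w = - P w" by (simp add: fun_Compl_def)

lemma finsupp_zero[simp]: "finsupp (0 :: 'g list \<Rightarrow> 'r::zero)"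
  by (simp add: finsupp_def)
lemma finsupp_add: "finsupp P \<Longrightarrow> finsupp Q \<Longrightarrow> finsupp (P + Q :: 'g list \<Rightarrow> 'r::monoid_add)"
  unfolding finsupp_def by (rule finite_subset[of _ "{w. P w \<noteq> 0} \<union> {w. Q w \<noteq> 0}"]) auto
lemma finsupp_neg: "finsupp P \<Longrightarrow> finsupp (- P :: 'g list \<Rightarrow> 'r::group_add)"
  unfolding finsupp_def by simp
lemma finsupp_diff: "finsupp P \<Longrightarrow> finsupp Q \<Longrightarrow> finsupp (P - Q :: 'g list \<Rightarrow> 'r::group_add)"
  unfolding finsupp_def by (rule finite_subset[of _ "{w. P w \<noteq> 0} \<union> {w. Q w \<noteq> 0}"]) auto
lemma finsupp_sum: "(\<And>x. x \<in> S \<Longrightarrow> finsupp (f x)) \<Longrightarrow> finsupp (sum f S :: 'g list \<Rightarrow> 'r::comm_monoid_add)"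
  by (induction S rule: infinite_finite_induct) (auto intro: finsupp_add)
lemma finsupp_scale: "finsupp P \<Longrightarrow> finsupp (\<lambda>w. r * P w :: 'r::ring_1)"
  unfolding finsupp_def by (rule finite_subset[of _ "{w. P w \<noteq> 0}"]) auto
lemma finsupp_len: "finite (UNIV :: 'g set) \<Longrightarrow> (\<And>w. P w \<noteq> 0 \<Longrightarrow> length w \<le> n) \<Longrightarrow> finsupp (P :: 'g list \<Rightarrow> 'r::zero)"
  unfolding finsupp_def by (rule finite_subset[OF _ finite_lists_length_le[of UNIV n]]) auto
lemma finsupp_scal[simp]: "finsupp (st_scal r)"
  unfolding finsupp_def st_scal_def by (rule finite_subset[of _ "{[]}"]) auto
lemma finsupp_gen[simp]: "finsupp (st_gen g)"
  unfolding finsupp_def st_gen_def by (rule finite_subset[of _ "{[g]}"]) auto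
lemma finsupp_one[simp]: "finsupp st_one"
  unfolding finsupp_def st_one_def by (rule finite_subset[of _ "{[]}"]) auto

definition dl :: "'g list \<Rightarrow> 'g list \<Rightarrow> 'r::ring_1" where "dl u = (\<lambda>w. if w = u then 1 else 0)"
lemma finsupp_dl[simp]: "finsupp (dl u)"
  unfolding finsupp_def dl_def by (rule finite_subset[of _ "{u}"]) auto

lemma finsupp_decomp: assumes "finite S" "{w. P w \<noteq> 0} \<subseteq> S"
  shows "P = (\<Sum>u\<in>S. (\<lambda>w. P u * dl u w))"
proof
  fix w show "P w = (\<Sum>u\<in>S. (\<lambda>w. P u * dl u w)) w"
  proof (cases "w \<in> S")
    case True then show ?thesis unfolding sum_fun_apply
      by (subst sum_single[OF assms(1) True]) (auto simp: dl_def)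
  next
    case False then have "P w = 0" using assms by auto
    then show ?thesis using False unfolding sum_fun_apply by (auto simp: dl_def intro!: sum.neutral)
  qed
qed

locale tw_ring =
  fixes \<sigma> :: "'r::ring_1 \<Rightarrow> 'r"
  assumes s_add: "\<sigma> (x + y) = \<sigma> x + \<sigma> y"
    and s_mult: "\<sigma> (x * y) = \<sigma> x * \<sigma> y"
    and s_inv: "\<sigma> (\<sigma> x) = x"
    and s_one: "\<sigma> 1 = 1"
begin

lemma s_zero[simp]: "\<sigma> 0 = 0"
  using s_add[of 0 0] by simp
lemma s_neg: "\<sigma> (- x) = - \<sigma> x"
  using s_add[of x "-x"] by (intro minus_unique[symmetric]) simp
lemma s_diff: "\<sigma> (x - y) = \<sigma> x - \<sigma> y"
  using s_add[of x "-y"] s_neg[of y] by simp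
lemma s_sum: "\<sigma> (sum f A) = sum (\<lambda>x. \<sigma> (f x)) A"
  by (induction A rule: infinite_finite_induct) (auto simp: s_add)

definition tw :: "bool \<Rightarrow> 'r \<Rightarrow> 'r" where "tw b x = (if b then \<sigma> x else x)"

lemma tw_simps[simp]: "tw b 0 = 0" "tw b 1 = 1" "tw False x = x" "tw True x = \<sigma> x"
  by (auto simp: tw_def s_one)
lemma tw_add: "tw b (x + y) = tw b x + tw b y" by (simp add: tw_def s_add)
lemma tw_mult: "tw b (x * y) = tw b x * tw b y" by (simp add: tw_def s_mult)
lemma tw_diff: "tw b (x - y) = tw b x - tw b y" by (simp add: tw_def s_diff)
lemma tw_neg: "tw b (- y) = - tw b y" by (simp add: tw_def s_neg)
lemma tw_sum: "tw b (sum f A) = sum (\<lambda>x. tw b (f x)) A" by (simp add: tw_def s_sum)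
lemma tw_tw: "tw b (tw c x) = tw (b \<noteq> c) x" by (simp add: tw_def s_inv)
lemma tw_eq0: "tw b x = 0 \<longleftrightarrow> x = 0"
  by (metis s_inv s_zero tw_def)

lemma stm: "st_mult \<sigma> p P Q w = (\<Sum>n\<le>length w. P (take n w) * tw (wpar p (take n w)) (Q (drop n w)))"
  by (simp add: st_mult_def tw_def)

lemma stm_Nil[simp]: "st_mult \<sigma> p P Q [] = P [] * Q []"
  by (simp add: stm)

lemma stm_Cons: "st_mult \<sigma> p P Q (c # w) =
   P [] * Q (c # w) + (\<Sum>n\<le>length w. P (c # take n w) * tw (p c \<noteq> wpar p (take n w)) (Q (drop n w)))"
  unfolding stm length_Cons sum.atMost_Suc_shift by simp

lemma stm_scal_left: "st_mult \<sigma> p (st_scal r) Q = (\<lambda>w. r * Q w)"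
proof
  fix w show "st_mult \<sigma> p (st_scal r) Q w = r * Q w"
    by (cases w) (simp_all add: stm_Cons st_scal_def)
qed

lemma stm_one_left: "st_mult \<sigma> p st_one Q = Q"
  using stm_scal_left[of p 1 Q] by (simp add: st_one_def st_scal_def)

lemma stm_one_right: "st_mult \<sigma> p P st_one = P"
proof
  fix w
  have "st_mult \<sigma> p P st_one w = P (take (length w) w) * tw (wpar p (take (length w) w)) (st_one (drop (length w) w))"
    unfolding stm by (rule sum_single) (auto simp: st_one_def)
  then show "st_mult \<sigma> p P st_one w = P w" by (simp add: st_one_def)
qed

definition len1 :: "('g list \<Rightarrow> 'r) \<Rightarrow> bool" where
  "len1 Z \<longleftrightarrow> (\<forall>w. length w \<noteq> 1 \<longrightarrow> Z w = 0)"

lemma stm_len1_Nil: "len1 Z \<Longrightarrow> st_mult \<sigma> p Z Q [] = 0"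
  by (simp add: len1_def)

lemma stm_len1_Cons: assumes "len1 Z"
  shows "st_mult \<sigma> p Z Q (c # w) = Z [c] * tw (p c) (Q w)"
proof -
  have "(\<Sum>n\<le>length w. Z (c # take n w) * tw (p c \<noteq> wpar p (take n w)) (Q (drop n w)))
     = Z (c # take 0 w) * tw (p c \<noteq> wpar p (take 0 w)) (Q (drop 0 w))"
    by (rule sum_single) (use assms in \<open>auto simp: len1_def\<close>)
  then show ?thesis using assms by (simp add: stm_Cons len1_def)
qed

lemma stm_assoc_len1: assumes "len1 Z"
  shows "st_mult \<sigma> p Z (st_mult \<sigma> p A B) = st_mult \<sigma> p (st_mult \<sigma> p Z A) B"
proof
  fix w show "st_mult \<sigma> p Z (st_mult \<sigma> p A B) w = st_mult \<sigma> p (st_mult \<sigma> p Z A) B w"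
  proof (cases w)
    case Nil then show ?thesis using assms by (simp add: stm_len1_Nil mult.assoc)
  next
    case (Cons c v)
    have "st_mult \<sigma> p Z (st_mult \<sigma> p A B) w = Z [c] * tw (p c) (st_mult \<sigma> p A B v)"
      using assms Cons by (simp add: stm_len1_Cons)
    also have "\<dots> = (\<Sum>n\<le>length v. Z [c] * (tw (p c) (A (take n v)) * tw (p c \<noteq> wpar p (take n v)) (B (drop n v))))"
      by (simp add: stm tw_sum tw_mult tw_tw sum_distrib_left)
    also have "\<dots> = st_mult \<sigma> p (st_mult \<sigma> p Z A) B w"
      unfolding Cons stm_Cons[of p "st_mult \<sigma> p Z A" B c v] using assms
      by (simp add: stm_len1_Nil stm_len1_Cons mult.assoc len1_def)
    finally show ?thesis .
  qed
qed

lemma stm_add_left: "st_mult \<sigma> p (P + Q) R = st_mult \<sigma> p P R + st_mult \<sigma> p Q R"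
  by (rule ext) (simp add: stm distrib_right sum.distrib)
lemma stm_add_right: "st_mult \<sigma> p R (P + Q) = st_mult \<sigma> p R P + st_mult \<sigma> p R Q"
  by (rule ext) (simp add: stm tw_add distrib_left sum.distrib)
lemma stm_diff_left: "st_mult \<sigma> p (P - Q) R = st_mult \<sigma> p P R - st_mult \<sigma> p Q R"
  by (rule ext) (simp add: stm left_diff_distrib sum_subtractf)
lemma stm_diff_right: "st_mult \<sigma> p R (P - Q) = st_mult \<sigma> p R P - st_mult \<sigma> p R Q"
  by (rule ext) (simp add: stm tw_diff right_diff_distrib sum_subtractf)
lemma stm_zero_left[simp]: "st_mult \<sigma> p 0 R = 0"
  by (rule ext) (simp add: stm)
lemma stm_zero_right[simp]: "st_mult \<sigma> p R 0 = 0"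
  by (rule ext) (simp add: stm)
lemma stm_zero_left'[simp]: "st_mult \<sigma> p (\<lambda>_. 0) R = (\<lambda>_. 0)"
  by (rule ext) (simp add: stm)
lemma stm_zero_right'[simp]: "st_mult \<sigma> p R (\<lambda>_. 0) = (\<lambda>_. 0)"
  by (rule ext) (simp add: stm)
lemma stm_sum_left: "st_mult \<sigma> p (sum f S) R = (\<Sum>x\<in>S. st_mult \<sigma> p (f x) R)"
proof (induction S rule: infinite_finite_induct)
  case (insert x F) then show ?case by (simp only: sum.insert[OF insert(1,2)] stm_add_left insert(3))
qed simp_all
lemma stm_sum_right: "st_mult \<sigma> p R (sum f S) = (\<Sum>x\<in>S. st_mult \<sigma> p R (f x))"
proof (induction S rule: infinite_finite_induct)
  case (insert x F) then show ?case by (simp only: sum.insert[OF insert(1,2)] stm_add_right insert(3))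
qed simp_all
lemma stm_scale_left: "st_mult \<sigma> p (\<lambda>w. r * P w) Q = (\<lambda>w. r * st_mult \<sigma> p P Q w)"
  by (rule ext) (simp add: stm sum_distrib_left mult.assoc)
lemma stm_scale_right: assumes "\<And>x. s * x = x * s" "\<sigma> s = s"
  shows "st_mult \<sigma> p P (\<lambda>w. s * Q w) = (\<lambda>w. s * st_mult \<sigma> p P Q w)"
proof (rule ext)
  fix w
  have t: "\<And>b x. tw b (s * x) = s * tw b x" using assms by (simp add: tw_def s_mult)
  have e: "\<And>x y. x * (s * y) = s * (x * y)" by (metis assms(1) mult.assoc)
  show "st_mult \<sigma> p P (\<lambda>w. s * Q w) w = s * st_mult \<sigma> p P Q w"
    by (simp add: stm t e sum_distrib_left)
qed

lemma finsupp_stm: assumes "finsupp P" "finsupp Q" shows "finsupp (st_mult \<sigma> p P Q)"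
  unfolding finsupp_def
proof (rule finite_subset)
  show "{w. st_mult \<sigma> p P Q w \<noteq> 0} \<subseteq> (\<lambda>(u, v). u @ v) ` ({u. P u \<noteq> 0} \<times> {v. Q v \<noteq> 0})"
  proof
    fix w assume "w \<in> {w. st_mult \<sigma> p P Q w \<noteq> 0}"
    define f where "f n = P (take n w) * tw (wpar p (take n w)) (Q (drop n w))" for n
    have "st_mult \<sigma> p P Q w \<noteq> 0" using \<open>w \<in> _\<close> by simp
    moreover have "sum f {..length w} = st_mult \<sigma> p P Q w" by (simp add: stm f_def)
    ultimately have "sum f {..length w} \<noteq> 0" by simp
    then obtain n where "f n \<noteq> 0"
      using sum.not_neutral_contains_not_neutral by blast
    then have "P (take n w) * tw (wpar p (take n w)) (Q (drop n w)) \<noteq> 0" by (simp add: f_def)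
    then have "P (take n w) \<noteq> 0" "Q (drop n w) \<noteq> 0" by auto
    then show "w \<in> (\<lambda>(u, v). u @ v) ` ({u. P u \<noteq> 0} \<times> {v. Q v \<noteq> 0})"
      by (intro image_eqI[of _ _ "(take n w, drop n w)"]) auto
  qed
  show "finite ((\<lambda>(u, v). u @ v) ` ({u. P u \<noteq> 0} \<times> {v. Q v \<noteq> 0}))"
    using assms by (auto simp: finsupp_def)
qed

lemma take_neq: assumes "i \<le> length (u @ v)" "i \<noteq> length u" shows "take i (u @ v) \<noteq> u"
proof
  assume "take i (u @ v) = u"
  then have "length (take i (u @ v)) = length u" by simp
  then show False using assms by simp
qed

lemma stm_dl: "st_mult \<sigma> p (dl u) (dl v) = dl (u @ v)"
proof
  fix w show "st_mult \<sigma> p (dl u) (dl v) w = dl (u @ v) w"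
  proof (cases "w = u @ v")
    case True
    have "\<And>i. i \<in> {..length w} \<Longrightarrow> i \<noteq> length u \<Longrightarrow> dl u (take i w) = (0::'r)"
      using True take_neq[of _ u v] by (simp add: dl_def del: take_append)
    then show ?thesis unfolding stm
      by (subst sum_single[of _ "length u"]; auto simp: dl_def True)
  next
    case False
    then have "\<And>n. dl u (take n w) * tw (wpar p (take n w)) (dl v (drop n w)) = (0::'r)"
      by (auto simp: dl_def)
    then show ?thesis using False unfolding stm by (simp add: dl_def)
  qed
qed

lemma stm_single: "st_mult \<sigma> p P Q [a] = P [] * Q [a] + P [a] * tw (p a) (Q [])"
  by (simp add: stm_Cons)
lemma stm_two: "st_mult \<sigma> p P Q [a, b] = P [] * Q [a, b] + P [a] * tw (p a) (Q [b]) + P [a, b] * tw (p a \<noteq> p b) (Q [])"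
  by (simp add: stm_Cons atMost_Suc add.assoc)

lemma I_neg: "x \<in> st_ideal \<sigma> p G \<Longrightarrow> - x \<in> st_ideal \<sigma> p G"
  using st_ideal.lmult[of "st_scal (-1)" x \<sigma> p G] by (simp add: stm_scal_left fun_Compl_def)
lemma I_diff: "x \<in> st_ideal \<sigma> p G \<Longrightarrow> y \<in> st_ideal \<sigma> p G \<Longrightarrow> x - y \<in> st_ideal \<sigma> p G"
  using st_ideal.add[of x \<sigma> p G "- y"] I_neg by auto
lemma I_sum: "(\<And>u. u \<in> S \<Longrightarrow> f u \<in> st_ideal \<sigma> p G) \<Longrightarrow> sum f S \<in> st_ideal \<sigma> p G"
  by (induction S rule: infinite_finite_induct) (auto intro: st_ideal.zero st_ideal.add)
lemma I_scale: "x \<in> st_ideal \<sigma> p G \<Longrightarrow> (\<lambda>w. r * x w) \<in> st_ideal \<sigma> p G"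
  using st_ideal.lmult[of "st_scal r" x \<sigma> p G] by (simp add: stm_scal_left)

lemma ideal_comb:
  assumes "finite U" "\<And>u. u \<in> U \<Longrightarrow> g u \<in> G" "\<And>w. E w = (\<Sum>u\<in>U. r u * g u w)"
  shows "E \<in> st_ideal \<sigma> p G"
proof -
  have "E = (\<Sum>u\<in>U. (\<lambda>w. r u * g u w))" by (rule ext) (simp add: assms(3) sum_fun_apply)
  also have "\<dots> \<in> st_ideal \<sigma> p G" by (intro I_sum I_scale st_ideal.gen assms(2))
  finally show ?thesis .
qed

lemma ideal_kill:
  fixes sc :: "'k::field \<Rightarrow> 'r" and D :: "'v \<Rightarrow> 'g \<Rightarrow> 'g \<Rightarrow> 'k"
  assumes central: "\<And>c x. sc c * x = x * sc c"
    and sc0: "sc 0 = 0"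
    and gens: "\<And>q. q \<in> G \<Longrightarrow> q [] = 0 \<and> (\<forall>a. q [a] = 0) \<and>
        (\<forall>v. (\<Sum>a\<in>UNIV. \<Sum>b\<in>UNIV. q [a, b] * sc (D v a b)) = 0)"
    and par: "\<And>v a b. D v a b \<noteq> 0 \<Longrightarrow> (p a \<noteq> p b) = \<pi> v"
    and x: "x \<in> st_ideal \<sigma> p G"
  shows "x [] = 0 \<and> (\<forall>a. x [a] = 0) \<and> (\<forall>v. (\<Sum>a\<in>UNIV. \<Sum>b\<in>UNIV. x [a, b] * sc (D v a b)) = 0)"
  using x
proof (induction rule: st_ideal.induct)
  case (gen q) then show ?case by (rule gens)
next
  case zero then show ?case by simp
next
  case (add x y) then show ?case by (simp add: distrib_right sum.distrib)
next
  case (lmult a x)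
  then show ?case by (simp add: stm_single stm_two mult.assoc flip: sum_distrib_left)
next
  case (rmult a x)
  have "\<And>v. (\<Sum>c\<in>UNIV. \<Sum>d\<in>UNIV. st_mult \<sigma> p x a [c, d] * sc (D v c d))
       = (\<Sum>c\<in>UNIV. \<Sum>d\<in>UNIV. x [c, d] * sc (D v c d)) * tw (\<pi> v) (a [])"
  proof -
    fix v
    have "\<And>c d. st_mult \<sigma> p x a [c, d] * sc (D v c d) = x [c, d] * sc (D v c d) * tw (\<pi> v) (a [])"
    proof -
      fix c d
      show "st_mult \<sigma> p x a [c, d] * sc (D v c d) = x [c, d] * sc (D v c d) * tw (\<pi> v) (a [])"
      proof (cases "D v c d = 0")
        case True then show ?thesis using sc0 by simp
      next
        case False then have "(p c \<noteq> p d) = \<pi> v" by (rule par)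
        then show ?thesis using rmult.IH by (simp add: stm_two mult.assoc central)
      qed
    qed
    then show "?thesis v" by (simp add: sum_distrib_right)
  qed
  then show ?case using rmult.IH by (simp add: stm_single stm_two)
qed

end


lemma sgnb_simps[simp]: "sgnb True = -1" "sgnb False = 1" by (simp_all add: sgnb_def)

locale SA =
  fixes sc :: "'k::field \<Rightarrow> 'r::ring_1" and Ev Od :: "'r set"
  assumes sa: "super_algebra sc Ev Od"
begin

lemma f_sc_1: "sc 1 = 1" using sa unfolding super_algebra_def by (elim conjE) assumption
lemma f_sc_add: "\<forall>a b. sc (a + b) = sc a + sc b" using sa unfolding super_algebra_def by (elim conjE) assumption
lemma f_sc_mult: "\<forall>a b. sc (a * b) = sc a * sc b" using sa unfolding super_algebra_def by (elim conjE) assumption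
lemma f_sc_central: "\<forall>a r. sc a * r = r * sc a" using sa unfolding super_algebra_def by (elim conjE) assumption
lemma sc_1[simp]: "sc 1 = 1" by (rule f_sc_1)
lemma sc_add: "sc (a + b) = sc a + sc b" using f_sc_add by blast
lemma sc_mult: "sc (a * b) = sc a * sc b" using f_sc_mult by blast
lemma sc_central: "sc a * r = r * sc a" using f_sc_central by blast
lemma sc_0[simp]: "sc 0 = 0" using sc_add[of 0 0] by simp
lemma sc_neg: "sc (- a) = - sc a" using sc_add[of a "-a"] by (intro minus_unique[symmetric]) simp
lemma sc_diff: "sc (a - b) = sc a - sc b" using sc_add[of a "-b"] sc_neg[of b] by simp
lemma sc_sum: "sc (sum f A) = (\<Sum>x\<in>A. sc (f x))"
  by (induction A rule: infinite_finite_induct) (auto simp: sc_add)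
lemma sc_sgnb[simp]: "sc (sgnb b) = sgnb b" by (cases b) (simp_all add: sc_neg)

lemma f_Ev0: "0 \<in> Ev" using sa unfolding super_algebra_def by (elim conjE) assumption
lemma f_Od0: "0 \<in> Od" using sa unfolding super_algebra_def by (elim conjE) assumption
lemma f_Ev_add: "\<forall>x\<in>Ev. \<forall>y\<in>Ev. x + y \<in> Ev" using sa unfolding super_algebra_def by (elim conjE) assumption
lemma f_Od_add: "\<forall>x\<in>Od. \<forall>y\<in>Od. x + y \<in> Od" using sa unfolding super_algebra_def by (elim conjE) assumption
lemma f_Ev_sc: "\<forall>c. \<forall>x\<in>Ev. sc c * x \<in> Ev" using sa unfolding super_algebra_def by (elim conjE) assumption
lemma f_Od_sc: "\<forall>c. \<forall>x\<in>Od. sc c * x \<in> Od" using sa unfolding super_algebra_def by (elim conjE) assumption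
lemma f_EE: "\<forall>x\<in>Ev. \<forall>y\<in>Ev. x * y \<in> Ev" using sa unfolding super_algebra_def by (elim conjE) assumption
lemma f_EO: "\<forall>x\<in>Ev. \<forall>y\<in>Od. x * y \<in> Od" using sa unfolding super_algebra_def by (elim conjE) assumption
lemma f_OE: "\<forall>x\<in>Od. \<forall>y\<in>Ev. x * y \<in> Od" using sa unfolding super_algebra_def by (elim conjE) assumption
lemma f_OO: "\<forall>x\<in>Od. \<forall>y\<in>Od. x * y \<in> Ev" using sa unfolding super_algebra_def by (elim conjE) assumption
lemma Ev0[simp]: "0 \<in> Ev" by (rule f_Ev0)
lemma Od0[simp]: "0 \<in> Od" by (rule f_Od0)
lemma Ev_add: "x \<in> Ev \<Longrightarrow> y \<in> Ev \<Longrightarrow> x + y \<in> Ev" using f_Ev_add by blast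
lemma Od_add: "x \<in> Od \<Longrightarrow> y \<in> Od \<Longrightarrow> x + y \<in> Od" using f_Od_add by blast
lemma Ev_sc: "x \<in> Ev \<Longrightarrow> sc c * x \<in> Ev" using f_Ev_sc by blast
lemma Od_sc: "x \<in> Od \<Longrightarrow> sc c * x \<in> Od" using f_Od_sc by blast
lemma Ev_neg: "x \<in> Ev \<Longrightarrow> - x \<in> Ev" using Ev_sc[of x "-1"] by (simp add: sc_neg)
lemma Od_neg: "x \<in> Od \<Longrightarrow> - x \<in> Od" using Od_sc[of x "-1"] by (simp add: sc_neg)
lemma EE: "x \<in> Ev \<Longrightarrow> y \<in> Ev \<Longrightarrow> x * y \<in> Ev" using f_EE by blast
lemma EO: "x \<in> Ev \<Longrightarrow> y \<in> Od \<Longrightarrow> x * y \<in> Od" using f_EO by blast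
lemma OE: "x \<in> Od \<Longrightarrow> y \<in> Ev \<Longrightarrow> x * y \<in> Od" using f_OE by blast
lemma OO: "x \<in> Od \<Longrightarrow> y \<in> Od \<Longrightarrow> x * y \<in> Ev" using f_OO by blast

lemma decomp: "\<exists>e d. e \<in> Ev \<and> d \<in> Od \<and> r = e + d"
proof -
  have "\<forall>r. \<exists>!q. fst q \<in> Ev \<and> snd q \<in> Od \<and> r = fst q + snd q"
    using sa unfolding super_algebra_def by (elim conjE) assumption
  then obtain q where "fst q \<in> Ev \<and> snd q \<in> Od \<and> r = fst q + snd q"
    by blast
  then show ?thesis by blast
qed

lemma uniq: assumes "e1 \<in> Ev" "d1 \<in> Od" "e2 \<in> Ev" "d2 \<in> Od" "e1 + d1 = e2 + d2"
  shows "e1 = e2 \<and> d1 = d2"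
proof -
  have "\<forall>r. \<exists>!q. fst q \<in> Ev \<and> snd q \<in> Od \<and> r = fst q + snd q"
    using sa unfolding super_algebra_def by (elim conjE) assumption
  then have "\<exists>!q. fst q \<in> Ev \<and> snd q \<in> Od \<and> e1 + d1 = fst q + snd q" by blast
  then obtain q where q: "\<And>y. fst y \<in> Ev \<and> snd y \<in> Od \<and> e1 + d1 = fst y + snd y \<Longrightarrow> y = q"
    unfolding Ex1_def by blast
  have "(e1, d1) = q" using assms by (intro q) simp
  moreover have "(e2, d2) = q" using assms by (intro q) simp
  ultimately have "(e1, d1) = (e2, d2)" by simp
  then show ?thesis by simp
qed

lemma EvOd0: "x \<in> Ev \<Longrightarrow> x \<in> Od \<Longrightarrow> x = 0"
  using uniq[of x 0 0 x] by simp

lemma one_Ev: "1 \<in> Ev"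
proof -
  obtain e d where eo: "e \<in> Ev" "d \<in> Od" "1 = e + d" using decomp by blast
  have "e + 0 = e * (e + d)" using eo(3) by simp
  then have "e + 0 = e * e + e * d" by (simp add: distrib_left)
  then have "e * d = 0" using uniq[of e 0 "e * e" "e * d"] eo EE EO by auto
  have "0 + d = (e + d) * d" using eo(3) by simp
  then have "0 + d = d * d + e * d" by (simp add: distrib_right add.commute)
  then have "d = d * d" using uniq[of 0 d "d * d" "e * d"] eo OO EO \<open>e * d = 0\<close> by auto
  moreover have "d * d \<in> Ev" using OO eo by simp
  ultimately have "d = 0" using EvOd0 eo by simp
  then show ?thesis using eo by simp
qed

lemma sc_Ev: "sc c \<in> Ev" using Ev_sc[OF one_Ev, of c] by simp

abbreviation \<sigma> where "\<sigma> \<equiv> gaut Ev Od"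

lemma gaut_eq: assumes "e \<in> Ev" "d \<in> Od" shows "\<sigma> (e + d) = e - d"
  unfolding gaut_def
proof (rule the_equality)
  show "\<exists>e'\<in>Ev. \<exists>f\<in>Od. e + d = e' + f \<and> e - d = e' - f" using assms by blast
  fix s assume "\<exists>e'\<in>Ev. \<exists>f\<in>Od. e + d = e' + f \<and> s = e' - f"
  then obtain e' f where "e' \<in> Ev" "f \<in> Od" "e + d = e' + f" "s = e' - f" by blast
  then show "s = e - d" using uniq[of e d e' f] assms by auto
qed

lemma gaut_Ev: "x \<in> Ev \<Longrightarrow> \<sigma> x = x" using gaut_eq[of x 0] by simp
lemma gaut_Od: "x \<in> Od \<Longrightarrow> \<sigma> x = - x" using gaut_eq[of 0 x] by simp

lemma gaut_add: "\<sigma> (x + y) = \<sigma> x + \<sigma> y"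
proof -
  obtain e d where a: "e \<in> Ev" "d \<in> Od" "x = e + d" using decomp by blast
  obtain e' d' where b: "e' \<in> Ev" "d' \<in> Od" "y = e' + d'" using decomp by blast
  have "x + y = (e + e') + (d + d')" using a b by (simp add: algebra_simps)
  then have 1: "\<sigma> (x + y) = (e + e') - (d + d')" using gaut_eq[OF Ev_add[OF a(1) b(1)] Od_add[OF a(2) b(2)]] by simp
  have 2: "\<sigma> x = e - d" "\<sigma> y = e' - d'" using a(3) b(3) gaut_eq[OF a(1) a(2)] gaut_eq[OF b(1) b(2)] by auto
  show ?thesis unfolding 1 2 by (simp add: algebra_simps)
qed

lemma gaut_mult: "\<sigma> (x * y) = \<sigma> x * \<sigma> y"
proof -
  obtain e d where a: "e \<in> Ev" "d \<in> Od" "x = e + d" using decomp by blast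
  obtain e' d' where b: "e' \<in> Ev" "d' \<in> Od" "y = e' + d'" using decomp by blast
  have "x * y = (e * e' + d * d') + (e * d' + d * e')" unfolding a(3) b(3) by (simp add: distrib_left distrib_right add_ac)
  moreover have E: "e * e' + d * d' \<in> Ev" using a b by (intro Ev_add EE OO)
  moreover have O: "e * d' + d * e' \<in> Od" using a b by (intro Od_add EO OE)
  ultimately have 1: "\<sigma> (x * y) = (e * e' + d * d') - (e * d' + d * e')" using gaut_eq[OF E O] by simp
  have 2: "\<sigma> x = e - d" "\<sigma> y = e' - d'" using a(3) b(3) gaut_eq[OF a(1) a(2)] gaut_eq[OF b(1) b(2)] by auto
  show ?thesis unfolding 1 2 by (simp add: left_diff_distrib right_diff_distrib diff_add_eq_diff_diff_swap)
qed

lemma gaut_inv: "\<sigma> (\<sigma> x) = x"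
proof -
  obtain e d where a: "e \<in> Ev" "d \<in> Od" "x = e + d" using decomp by blast
  have "\<sigma> x = e + (- d)" using a(3) gaut_eq[OF a(1) a(2)] by simp
  then have "\<sigma> (\<sigma> x) = e - (- d)" using a gaut_eq[OF a(1) Od_neg[OF a(2)]] by simp
  then show ?thesis using a by simp
qed

lemma gaut_one: "\<sigma> 1 = 1" using gaut_Ev[OF one_Ev] .

sublocale T: tw_ring \<sigma>
  by unfold_locales (simp_all add: gaut_add gaut_mult gaut_inv gaut_one)

lemma homog_0[simp]: "homog Ev Od b 0" by (simp add: homog_def)
lemma homog_add: "homog Ev Od b x \<Longrightarrow> homog Ev Od b y \<Longrightarrow> homog Ev Od b (x + y)"
  by (auto simp: homog_def Ev_add Od_add split: if_splits)
lemma homog_sum: "(\<And>x. x \<in> A \<Longrightarrow> homog Ev Od b (f x)) \<Longrightarrow> homog Ev Od b (sum f A)"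
  by (induction A rule: infinite_finite_induct) (auto intro: homog_add)
lemma homog_mult: "homog Ev Od b x \<Longrightarrow> homog Ev Od c y \<Longrightarrow> homog Ev Od (b \<noteq> c) (x * y)"
  by (auto simp: homog_def EE EO OE OO split: if_splits)
lemma homog_sc: "homog Ev Od b x \<Longrightarrow> homog Ev Od b (sc c * x)"
  by (auto simp: homog_def Ev_sc Od_sc split: if_splits)
lemma homog_one: "homog Ev Od False 1" by (simp add: homog_def one_Ev)
lemma tw_homog: "homog Ev Od q x \<Longrightarrow> T.tw b x = sgnb (b \<and> q) * x"
  by (auto simp: homog_def T.tw_def gaut_Ev gaut_Od split: if_splits)
lemma homog_tw: "homog Ev Od q x \<Longrightarrow> homog Ev Od q (T.tw b x)"
  by (auto simp: homog_def T.tw_def gaut_Ev gaut_Od Od_neg Ev_neg split: if_splits)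

end

interpretation Id: tw_ring id by unfold_locales simp_all


declare plus_fun_def [simp del] zero_fun_def [simp del]

definition Zf :: "('g1 \<Rightarrow> 'g2 \<Rightarrow> 'r::ring_1) \<Rightarrow> 'g1 \<Rightarrow> 'g2 list \<Rightarrow> 'r" where
  "Zf z g w = (if length w = 1 then z g (hd w) else 0)"

lemma Zf_single[simp]: "Zf z g [h] = z g h" by (simp add: Zf_def)
lemma Zf_Nil[simp]: "Zf z g [] = 0" by (simp add: Zf_def)

lemma Id_scale_right: "st_mult id p P (\<lambda>w. (s::'k::field) * Q w) = (\<lambda>w. s * st_mult id p P Q w)"
  by (rule Id.stm_scale_right) (simp_all add: mult.commute)

context SA
begin

lemma Zf_len1: "T.len1 (Zf z g)" by (simp add: T.len1_def Zf_def)

lemma sc_lcomm: "sc a * (sc b * x) = sc b * (sc a * x)"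
  by (metis mult.assoc sc_central)

lemma T_scale_right: "st_mult \<sigma> p P (\<lambda>w. sc c * Q w) = (\<lambda>w. sc c * st_mult \<sigma> p P Q w)"
  by (rule T.stm_scale_right) (simp_all add: sc_central gaut_Ev sc_Ev)

definition Gw :: "('g2 \<Rightarrow> bool) \<Rightarrow> ('g1 \<Rightarrow> 'g2 \<Rightarrow> 'r) \<Rightarrow> 'g1 list \<Rightarrow> 'g2 list \<Rightarrow> 'r" where
  "Gw p2 z w = foldr (\<lambda>g A. st_mult \<sigma> p2 (Zf z g) A) w st_one"

lemma Gw_Nil[simp]: "Gw p2 z [] = st_one" by (simp add: Gw_def)
lemma Gw_Cons: "Gw p2 z (g # w) = st_mult \<sigma> p2 (Zf z g) (Gw p2 z w)" by (simp add: Gw_def)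

lemma Gw_append: "Gw p2 z (u @ v) = st_mult \<sigma> p2 (Gw p2 z u) (Gw p2 z v)"
proof (induction u)
  case Nil then show ?case by (simp add: T.stm_one_left)
next
  case (Cons g u) then show ?case by (simp add: Gw_Cons T.stm_assoc_len1[OF Zf_len1])
qed

lemma Gw_single: "Gw p2 z [g] = Zf z g" by (simp add: Gw_Cons T.stm_one_right)

lemma Gw_len: "Gw p2 z u v \<noteq> 0 \<Longrightarrow> length v = length u"
proof (induction u arbitrary: v)
  case Nil then show ?case by (simp add: st_one_def split: if_splits)
next
  case (Cons g u)
  show ?case
  proof (cases v)
    case Nil then show ?thesis using Cons.prems by (simp add: Gw_Cons T.stm_len1_Nil[OF Zf_len1])
  next
    case (Cons c v')
    then have "Gw p2 z u v' \<noteq> 0" using Cons.prems by (auto simp: Gw_Cons T.stm_len1_Cons[OF Zf_len1])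
    then show ?thesis using Cons.IH Cons by simp
  qed
qed

lemma Gw_homog:
  assumes z: "\<And>g h. homog Ev Od (p1 g \<noteq> p2 h) (z g h)"
  shows "homog Ev Od (wpar p1 u \<noteq> wpar p2 v) (Gw p2 z u v)"
proof (induction u arbitrary: v)
  case Nil then show ?case by (simp add: st_one_def homog_one)
next
  case (Cons g u)
  show ?case
  proof (cases v)
    case Nil then show ?thesis by (simp add: Gw_Cons T.stm_len1_Nil[OF Zf_len1])
  next
    case (Cons c v')
    have "homog Ev Od ((p1 g \<noteq> p2 c) \<noteq> (wpar p1 u \<noteq> wpar p2 v')) (z g c * T.tw (p2 c) (Gw p2 z u v'))"
      by (intro homog_mult z homog_tw Cons.IH)
    moreover have "((p1 g \<noteq> p2 c) \<noteq> (wpar p1 u \<noteq> wpar p2 v')) = (wpar p1 (g # u) \<noteq> wpar p2 v)"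
      using Cons by auto
    ultimately show ?thesis using Cons by (simp add: Gw_Cons T.stm_len1_Cons[OF Zf_len1])
  qed
qed

lemma finsupp_Gw: "finite (UNIV :: 'g2 set) \<Longrightarrow> finsupp (Gw p2 z u :: 'g2 list \<Rightarrow> 'r)"
  by (rule finsupp_len[of _ "length u"]) (auto dest: Gw_len)

definition Fm :: "('g2 \<Rightarrow> bool) \<Rightarrow> ('g1 \<Rightarrow> 'g2 \<Rightarrow> 'r) \<Rightarrow> ('g1 list \<Rightarrow> 'k) \<Rightarrow> 'g2 list \<Rightarrow> 'r" where
  "Fm p2 z P = (\<lambda>v. \<Sum>u\<in>{u. P u \<noteq> 0}. sc (P u) * Gw p2 z u v)"

lemma Fm_eq: assumes "finite S" "{u. P u \<noteq> 0} \<subseteq> S"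
  shows "Fm p2 z P v = (\<Sum>u\<in>S. sc (P u) * Gw p2 z u v)"
  unfolding Fm_def by (rule sum.mono_neutral_left) (use assms in auto)

lemma Fm_fun: assumes "finite S" "{u. P u \<noteq> 0} \<subseteq> S"
  shows "Fm p2 z P = (\<Sum>u\<in>S. (\<lambda>v. sc (P u) * Gw p2 z u v))"
  by (rule ext) (simp add: Fm_eq[OF assms] sum_fun_apply)

lemma Fm_add: assumes "finsupp P" "finsupp Q"
  shows "Fm p2 z (P + Q) = Fm p2 z P + Fm p2 z Q"
proof (rule ext)
  fix v
  define S where "S = {u. P u \<noteq> 0} \<union> {u. Q u \<noteq> 0}"
  have fS: "finite S" using assms by (simp add: S_def finsupp_def)
  have "Fm p2 z (P + Q) v = (\<Sum>u\<in>S. sc ((P + Q) u) * Gw p2 z u v)"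
    by (rule Fm_eq[OF fS]) (auto simp: S_def)
  also have "\<dots> = (\<Sum>u\<in>S. sc (P u) * Gw p2 z u v) + (\<Sum>u\<in>S. sc (Q u) * Gw p2 z u v)"
    by (simp add: sc_add distrib_right sum.distrib)
  also have "\<dots> = Fm p2 z P v + Fm p2 z Q v"
    by (simp add: Fm_eq[OF fS] S_def)
  finally show "Fm p2 z (P + Q) v = (Fm p2 z P + Fm p2 z Q) v" by simp
qed

lemma Fm_diff: assumes "finsupp P" "finsupp Q"
  shows "Fm p2 z (P - Q) = Fm p2 z P - Fm p2 z Q"
proof (rule ext)
  fix v
  define S where "S = {u. P u \<noteq> 0} \<union> {u. Q u \<noteq> 0}"
  have fS: "finite S" using assms by (simp add: S_def finsupp_def)
  have "Fm p2 z (P - Q) v = (\<Sum>u\<in>S. sc ((P - Q) u) * Gw p2 z u v)"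
    by (rule Fm_eq[OF fS]) (auto simp: S_def)
  also have "\<dots> = (\<Sum>u\<in>S. sc (P u) * Gw p2 z u v) - (\<Sum>u\<in>S. sc (Q u) * Gw p2 z u v)"
    by (simp add: sc_diff left_diff_distrib sum_subtractf)
  also have "\<dots> = Fm p2 z P v - Fm p2 z Q v"
    by (simp add: Fm_eq[OF fS] S_def)
  finally show "Fm p2 z (P - Q) v = (Fm p2 z P - Fm p2 z Q) v" by simp
qed

lemma Fm_zero[simp]: "Fm p2 z 0 = 0"
  by (rule ext) (simp add: Fm_def)
lemma Fm_zero'[simp]: "Fm p2 z (\<lambda>_. 0) = (\<lambda>_. 0)"
  by (rule ext) (simp add: Fm_def)

lemma Fm_scale: assumes "finsupp P"
  shows "Fm p2 z (\<lambda>w. c * P w) = (\<lambda>v. sc c * Fm p2 z P v)"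
proof (rule ext)
  fix v
  define S where "S = {u. P u \<noteq> 0}"
  have fS: "finite S" using assms by (simp add: S_def finsupp_def)
  have "Fm p2 z (\<lambda>w. c * P w) v = (\<Sum>u\<in>S. sc (c * P u) * Gw p2 z u v)"
    by (rule Fm_eq[OF fS]) (auto simp: S_def)
  also have "\<dots> = sc c * (\<Sum>u\<in>S. sc (P u) * Gw p2 z u v)"
    by (simp add: sc_mult sum_distrib_left mult.assoc)
  also have "\<dots> = sc c * Fm p2 z P v"
    by (simp add: Fm_eq[OF fS] S_def)
  finally show "Fm p2 z (\<lambda>w. c * P w) v = sc c * Fm p2 z P v" .
qed

lemma Fm_smul: "finsupp P \<Longrightarrow> Fm p2 z (st_smul id c P) = st_smul sc c (Fm p2 z P)"
  unfolding st_smul_def id_def by (rule Fm_scale)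

lemma Fm_sum: "(\<And>x. x \<in> A \<Longrightarrow> finsupp (f x)) \<Longrightarrow> Fm p2 z (sum f A) = (\<Sum>x\<in>A. Fm p2 z (f x))"
proof (induction A rule: infinite_finite_induct)
  case (insert x F)
  have a: "finsupp (f x)" "finsupp (sum f F)" using insert.prems by (auto intro: finsupp_sum)
  have "Fm p2 z (sum f F) = (\<Sum>x\<in>F. Fm p2 z (f x))" using insert.prems by (intro insert.IH) auto
  then show ?case by (simp only: sum.insert[OF insert(1,2)] Fm_add[OF a])
qed simp_all

lemma Fm_dl: "Fm p2 z (dl u) = Gw p2 z u"
  by (rule ext) (simp add: Fm_eq[of "{u}"] dl_def)

lemma dl_gen: "st_gen g = dl [g]" by (simp add: st_gen_def dl_def)
lemma dl_one: "st_one = dl []" by (simp add: st_one_def dl_def)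

lemma Fm_gen: "Fm p2 z (st_gen g) = Zf z g"
  by (simp add: dl_gen Fm_dl Gw_single)
lemma Fm_one: "Fm p2 z st_one = st_one"
  by (simp add: dl_one Fm_dl)

lemma finsupp_Fm: assumes "finite (UNIV :: 'g2 set)" "finsupp P"
  shows "finsupp (Fm p2 z P :: 'g2 list \<Rightarrow> 'r)"
proof -
  have e: "Fm p2 z P = (\<Sum>u\<in>{u. P u \<noteq> 0}. (\<lambda>v. sc (P u) * Gw p2 z u v))"
    using assms by (intro Fm_fun) (auto simp: finsupp_def)
  have "finsupp (\<Sum>u\<in>{u. P u \<noteq> 0}. (\<lambda>v. sc (P u) * Gw p2 z u v))"
    by (intro finsupp_sum finsupp_scale finsupp_Gw assms(1))
  then show ?thesis unfolding e .
qed

lemma Fm_mult: fixes p2 :: "'g2 \<Rightarrow> bool" assumes "finite (UNIV :: 'g2 set)" "finsupp P" "finsupp Q"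
  shows "Fm p2 z (st_mult id p1 P Q) = st_mult \<sigma> p2 (Fm p2 z P) (Fm p2 z Q)"
proof -
  define SP where "SP = {u. P u \<noteq> 0}"
  define SQ where "SQ = {u. Q u \<noteq> 0}"
  have fP: "finite SP" and fQ: "finite SQ" using assms by (simp_all add: SP_def SQ_def finsupp_def)
  have dP: "P = (\<Sum>u\<in>SP. (\<lambda>w. P u * dl u w))" by (rule finsupp_decomp[OF fP]) (simp add: SP_def)
  have dQ: "Q = (\<Sum>u\<in>SQ. (\<lambda>w. Q u * dl u w))" by (rule finsupp_decomp[OF fQ]) (simp add: SQ_def)
  have "st_mult id p1 P Q = st_mult id p1 (\<Sum>u\<in>SP. (\<lambda>w. P u * dl u w)) (\<Sum>v\<in>SQ. (\<lambda>w. Q v * dl v w))"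
    by (rule arg_cong2[of P _ Q _ "st_mult id p1", OF dP dQ])
  also have "\<dots> = (\<Sum>u\<in>SP. \<Sum>v\<in>SQ. (\<lambda>w. P u * (Q v * dl (u @ v) w)))"
    by (rule ext) (simp add: Id.stm_sum_left Id.stm_sum_right Id.stm_scale_left Id_scale_right Id.stm_dl sum_fun_apply sum_distrib_left mult.left_commute, rule sum.swap)
  finally have e1: "st_mult id p1 P Q = (\<Sum>u\<in>SP. \<Sum>v\<in>SQ. (\<lambda>w. P u * (Q v * dl (u @ v) w)))" .
  have "Fm p2 z (st_mult id p1 P Q) = (\<Sum>u\<in>SP. \<Sum>v\<in>SQ. (\<lambda>x. sc (P u) * (sc (Q v) * Gw p2 z (u @ v) x)))"
    unfolding e1
    by (simp add: Fm_sum finsupp_sum finsupp_scale Fm_scale Fm_dl)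
  also have "\<dots> = st_mult \<sigma> p2 (\<Sum>u\<in>SP. (\<lambda>x. sc (P u) * Gw p2 z u x)) (\<Sum>v\<in>SQ. (\<lambda>x. sc (Q v) * Gw p2 z v x))"
    by (rule ext) (simp add: T.stm_sum_left T.stm_sum_right T.stm_scale_left T_scale_right Gw_append sum_fun_apply sum_distrib_left sc_lcomm, rule sum.swap)
  also have "\<dots> = st_mult \<sigma> p2 (Fm p2 z P) (Fm p2 z Q)"
    by (simp add: Fm_fun[OF fP] Fm_fun[OF fQ] SP_def SQ_def)
  finally show ?thesis .
qed

lemma Fm_ideal:
  fixes p2 :: "'g2 \<Rightarrow> bool"
  assumes fin: "finite (UNIV :: 'g2 set)"
    and gens: "\<And>q. q \<in> G1 \<Longrightarrow> finsupp q \<and> Fm p2 z q \<in> st_ideal \<sigma> p2 G2"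
    and x: "x \<in> st_ideal id p1 G1"
  shows "finsupp x \<and> Fm p2 z x \<in> st_ideal \<sigma> p2 G2"
  using x
proof (induction rule: st_ideal.induct)
  case (gen q) then show ?case by (rule gens)
next
  case zero
  have "finsupp (0::'g1 list \<Rightarrow> 'k)" by (rule finsupp_zero)
  then show ?case using st_ideal.zero[of \<sigma> p2 G2] by (simp only: Fm_zero)
next
  case (add x y)
  then have a: "finsupp x" "finsupp y" "Fm p2 z x \<in> st_ideal \<sigma> p2 G2" "Fm p2 z y \<in> st_ideal \<sigma> p2 G2" by auto
  have "Fm p2 z (x + y) \<in> st_ideal \<sigma> p2 G2" unfolding Fm_add[OF a(1,2)] by (rule st_ideal.add[OF a(3,4)])
  then show ?case using finsupp_add[OF a(1,2)] by blast
next
  case (lmult a x)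
  then have b: "finsupp x" "Fm p2 z x \<in> st_ideal \<sigma> p2 G2" by auto
  have "st_mult \<sigma> p2 (Fm p2 z a) (Fm p2 z x) \<in> st_ideal \<sigma> p2 G2" by (rule st_ideal.lmult) (rule finsupp_Fm[OF fin lmult(1)], rule b(2))
  then show ?case using Id.finsupp_stm[OF lmult(1) b(1)] Fm_mult[OF fin lmult(1) b(1)] by simp
next
  case (rmult a x)
  then have b: "finsupp x" "Fm p2 z x \<in> st_ideal \<sigma> p2 G2" by auto
  have "st_mult \<sigma> p2 (Fm p2 z x) (Fm p2 z a) \<in> st_ideal \<sigma> p2 G2" by (rule st_ideal.rmult) (rule finsupp_Fm[OF fin rmult(1)], rule b(2))
  then show ?case using Id.finsupp_stm[OF b(1) rmult(1)] Fm_mult[OF fin b(1) rmult(1)] by simp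
qed

end

lemma diff_split: "x - z = (x - y) + (y - (z::'a::ab_group_add))" by simp

lemma I_trans: "x - y \<in> st_ideal s p G \<Longrightarrow> y - z \<in> st_ideal s p G \<Longrightarrow> x - z \<in> st_ideal s p G"
  by (subst diff_split[of x z y]) (rule st_ideal.add)

context SA
begin

lemma I_sub: "x \<in> st_ideal \<sigma> p G \<Longrightarrow> x - y \<in> st_ideal \<sigma> p G \<Longrightarrow> y \<in> st_ideal \<sigma> p G"
proof -
  assume a: "x \<in> st_ideal \<sigma> p G" "x - y \<in> st_ideal \<sigma> p G"
  have "y = x - (x - y)" by simp
  then show ?thesis using T.I_diff[OF a] by simp
qed

lemma I_sum_cong: "(\<And>x. x \<in> A \<Longrightarrow> f x - g x \<in> st_ideal \<sigma> p G) \<Longrightarrow> sum f A - sum g A \<in> st_ideal \<sigma> p G"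
  unfolding sum_subtractf[symmetric] by (rule T.I_sum)

lemma I_smul_cong: "x - y \<in> st_ideal \<sigma> p G \<Longrightarrow> st_smul sc c x - st_smul sc c y \<in> st_ideal \<sigma> p G"
proof -
  assume a: "x - y \<in> st_ideal \<sigma> p G"
  have "st_smul sc c x - st_smul sc c y = (\<lambda>w. sc c * (x - y) w)"
    by (rule ext) (simp add: st_smul_def right_diff_distrib)
  then show ?thesis using T.I_scale[OF a] by simp
qed

lemma I_mult_cong:
  assumes "x - x' \<in> st_ideal \<sigma> p G" "y - y' \<in> st_ideal \<sigma> p G" "finsupp y" "finsupp x'"
  shows "st_mult \<sigma> p x y - st_mult \<sigma> p x' y' \<in> st_ideal \<sigma> p G"
proof -
  have "st_mult \<sigma> p x y - st_mult \<sigma> p x' y' = st_mult \<sigma> p (x - x') y + st_mult \<sigma> p x' (y - y')"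
    by (simp add: T.stm_diff_left T.stm_diff_right)
  also have "\<dots> \<in> st_ideal \<sigma> p G"
    by (intro st_ideal.add st_ideal.rmult st_ideal.lmult assms)
  finally show ?thesis .
qed

lemma morph_exists:
  fixes p1 :: "'g1 \<Rightarrow> bool" and p2 :: "'g2 \<Rightarrow> bool" and z :: "'g1 \<Rightarrow> 'g2 \<Rightarrow> 'r"
  assumes fin2: "finite (UNIV :: 'g2 set)"
    and z: "\<And>g h. homog Ev Od (p1 g \<noteq> p2 h) (z g h)"
    and gens: "\<And>q. q \<in> G1 \<Longrightarrow> finsupp q \<and> Fm p2 z q \<in> st_ideal \<sigma> p2 G2"
  shows "qa_morphism p1 (st_ideal id p1 G1) sc Ev Od p2 (st_ideal \<sigma> p2 G2) (Fm p2 z)"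
proof -
  let ?J = "st_ideal \<sigma> p2 G2"
  have Z: "(0::'g2 list \<Rightarrow> 'r) \<in> ?J" by (rule st_ideal.zero)
  have A: "\<forall>P. finsupp P \<longrightarrow> finsupp (Fm p2 z P)" using finsupp_Fm[OF fin2] by blast
  have B: "\<forall>P Q. finsupp P \<and> finsupp Q \<and> P - Q \<in> st_ideal id p1 G1 \<longrightarrow> Fm p2 z P - Fm p2 z Q \<in> ?J"
  proof (intro allI impI)
    fix P Q assume a: "finsupp P \<and> finsupp Q \<and> P - Q \<in> st_ideal id p1 G1"
    then have "Fm p2 z (P - Q) \<in> ?J" using Fm_ideal[OF fin2 gens] by blast
    then show "Fm p2 z P - Fm p2 z Q \<in> ?J" using a Fm_diff by metis
  qed
  have C: "\<forall>P Q. finsupp P \<and> finsupp Q \<longrightarrow> Fm p2 z (P + Q) - (Fm p2 z P + Fm p2 z Q) \<in> ?J"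
  proof (intro allI impI)
    fix P Q :: "'g1 list \<Rightarrow> 'k" assume "finsupp P \<and> finsupp Q"
    then have "Fm p2 z (P + Q) - (Fm p2 z P + Fm p2 z Q) = 0" by (simp add: Fm_add)
    then show "Fm p2 z (P + Q) - (Fm p2 z P + Fm p2 z Q) \<in> ?J" using Z by simp
  qed
  have D: "\<forall>c P. finsupp P \<longrightarrow> Fm p2 z (st_smul id c P) - st_smul sc c (Fm p2 z P) \<in> ?J"
  proof (intro allI impI)
    fix c and P :: "'g1 list \<Rightarrow> 'k" assume "finsupp P"
    then have "Fm p2 z (st_smul id c P) - st_smul sc c (Fm p2 z P) = 0" by (simp add: Fm_smul)
    then show "Fm p2 z (st_smul id c P) - st_smul sc c (Fm p2 z P) \<in> ?J" using Z by simp
  qed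
  have E: "\<forall>P Q. finsupp P \<and> finsupp Q \<longrightarrow>
        Fm p2 z (st_mult id p1 P Q) - st_mult \<sigma> p2 (Fm p2 z P) (Fm p2 z Q) \<in> ?J"
  proof (intro allI impI)
    fix P Q :: "'g1 list \<Rightarrow> 'k" assume a: "finsupp P \<and> finsupp Q"
    then have "Fm p2 z (st_mult id p1 P Q) - st_mult \<sigma> p2 (Fm p2 z P) (Fm p2 z Q) = 0"
      using Fm_mult[OF fin2, of P Q] by simp
    then show "Fm p2 z (st_mult id p1 P Q) - st_mult \<sigma> p2 (Fm p2 z P) (Fm p2 z Q) \<in> ?J" using Z by simp
  qed
  have F: "Fm p2 z st_one - st_one \<in> ?J" using Z by (simp only: Fm_one diff_self)
  have G: "\<forall>P n. finsupp P \<and> (\<forall>w. P w \<noteq> 0 \<longrightarrow> length w = n) \<longrightarrow>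
        (\<exists>Q. finsupp Q \<and> Fm p2 z P - Q \<in> ?J \<and> (\<forall>w. Q w \<noteq> 0 \<longrightarrow> length w = n))"
  proof (intro allI impI)
    fix P :: "'g1 list \<Rightarrow> 'k" and n
    assume a: "finsupp P \<and> (\<forall>w. P w \<noteq> 0 \<longrightarrow> length w = n)"
    have "\<forall>w. Fm p2 z P w \<noteq> 0 \<longrightarrow> length w = n"
    proof (intro allI impI)
      fix w assume "Fm p2 z P w \<noteq> 0"
      then obtain u where "u \<in> {u. P u \<noteq> 0}" "sc (P u) * Gw p2 z u w \<noteq> 0"
        unfolding Fm_def using sum.not_neutral_contains_not_neutral by blast
      then have "Gw p2 z u w \<noteq> 0" "P u \<noteq> 0" by auto
      then show "length w = n" using a Gw_len[of p2 z u w] by simp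
    qed
    then show "\<exists>Q. finsupp Q \<and> Fm p2 z P - Q \<in> ?J \<and> (\<forall>w. Q w \<noteq> 0 \<longrightarrow> length w = n)"
      using a A Z by (intro exI[of _ "Fm p2 z P"]) simp
  qed
  have H: "\<forall>P b. finsupp P \<and> (\<forall>w. P w \<noteq> 0 \<longrightarrow> wpar p1 w = b) \<longrightarrow>
        (\<exists>Q. finsupp Q \<and> Fm p2 z P - Q \<in> ?J \<and> (\<forall>w. homog Ev Od (b \<noteq> wpar p2 w) (Q w)))"
  proof (intro allI impI)
    fix P :: "'g1 list \<Rightarrow> 'k" and b
    assume a: "finsupp P \<and> (\<forall>w. P w \<noteq> 0 \<longrightarrow> wpar p1 w = b)"
    have "\<forall>w. homog Ev Od (b \<noteq> wpar p2 w) (Fm p2 z P w)"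
    proof
      fix w show "homog Ev Od (b \<noteq> wpar p2 w) (Fm p2 z P w)"
        unfolding Fm_def
      proof (rule homog_sum)
        fix u assume "u \<in> {u. P u \<noteq> 0}"
        then have "wpar p1 u = b" using a by auto
        then show "homog Ev Od (b \<noteq> wpar p2 w) (sc (P u) * Gw p2 z u w)"
        proof -
          have "homog Ev Od (wpar p1 u \<noteq> wpar p2 w) (Gw p2 z u w)" by (rule Gw_homog) (rule z)
          then show ?thesis using \<open>wpar p1 u = b\<close> by (intro homog_sc) simp
        qed
      qed
    qed
    then show "\<exists>Q. finsupp Q \<and> Fm p2 z P - Q \<in> ?J \<and> (\<forall>w. homog Ev Od (b \<noteq> wpar p2 w) (Q w))"
      using a A Z by (intro exI[of _ "Fm p2 z P"]) simp
  qed
  show ?thesis unfolding qa_morphism_def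
    by (intro conjI) (rule A, rule B, rule C, rule D, rule E, rule F, rule G, rule H)
qed

lemma morph_rel:
  fixes p1 :: "'g1 \<Rightarrow> bool" and p2 :: "'g2 \<Rightarrow> bool" and X :: "'g1 \<Rightarrow> 'g2 list \<Rightarrow> 'r"
    and c :: "'g1 \<Rightarrow> 'g1 \<Rightarrow> 'k"
  assumes qa: "qa_morphism p1 J1 sc Ev Od p2 (st_ideal \<sigma> p2 G2) F"
    and FX: "\<forall>g. F (st_gen g) - X g \<in> st_ideal \<sigma> p2 G2"
    and fX: "\<And>g. finsupp (X g)"
    and rel: "(\<Sum>a\<in>UNIV. \<Sum>b\<in>UNIV. st_smul id (c a b) (st_mult id p1 (st_gen a) (st_gen b))) \<in> J1"
  shows "(\<Sum>a\<in>UNIV. \<Sum>b\<in>UNIV. st_smul sc (c a b) (st_mult \<sigma> p2 (X a) (X b))) \<in> st_ideal \<sigma> p2 G2"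
proof -
  let ?J = "st_ideal \<sigma> p2 G2"
  have qA': "\<forall>P. finsupp P \<longrightarrow> finsupp (F P)"
    using qa unfolding qa_morphism_def by (elim conjE) assumption
  have qB': "\<forall>P Q. finsupp P \<and> finsupp Q \<and> P - Q \<in> J1 \<longrightarrow> F P - F Q \<in> ?J"
    using qa unfolding qa_morphism_def by (elim conjE) assumption
  have qC': "\<forall>P Q. finsupp P \<and> finsupp Q \<longrightarrow> F (P + Q) - (F P + F Q) \<in> ?J"
    using qa unfolding qa_morphism_def by (elim conjE) assumption
  have qD': "\<forall>c P. finsupp P \<longrightarrow> F (st_smul id c P) - st_smul sc c (F P) \<in> ?J"
    using qa unfolding qa_morphism_def by (elim conjE) assumption
  have qE': "\<forall>P Q. finsupp P \<and> finsupp Q \<longrightarrow> F (st_mult id p1 P Q) - st_mult \<sigma> p2 (F P) (F Q) \<in> ?J"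
    using qa unfolding qa_morphism_def by (elim conjE) assumption
  have qA: "\<And>P. finsupp P \<Longrightarrow> finsupp (F P)" using qA' by blast
  have qB: "\<And>P Q. finsupp P \<Longrightarrow> finsupp Q \<Longrightarrow> P - Q \<in> J1 \<Longrightarrow> F P - F Q \<in> ?J" using qB' by blast
  have qC: "\<And>P Q. finsupp P \<Longrightarrow> finsupp Q \<Longrightarrow> F (P + Q) - (F P + F Q) \<in> ?J" using qC' by blast
  have qD: "\<And>c P. finsupp P \<Longrightarrow> F (st_smul id c P) - st_smul sc c (F P) \<in> ?J" using qD' by blast
  have qE: "\<And>P Q. finsupp P \<Longrightarrow> finsupp Q \<Longrightarrow> F (st_mult id p1 P Q) - st_mult \<sigma> p2 (F P) (F Q) \<in> ?J" using qE' by blast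
  have F0: "F 0 \<in> ?J"
  proof -
    have "F (0 + 0) - (F 0 + F 0) \<in> ?J" using qC[of 0 0] by simp
    moreover have "F (0 + 0) - (F 0 + F 0) = - F 0" by simp
    ultimately show ?thesis using T.I_neg[of "- F 0"] by simp
  qed
  have Fsum: "\<And>f A. (\<And>x. x \<in> A \<Longrightarrow> finsupp (f x)) \<Longrightarrow> F (sum f A) - (\<Sum>x\<in>A. F (f x)) \<in> ?J"
  proof -
    fix f :: "'x \<Rightarrow> 'g1 list \<Rightarrow> 'k" and A
    show "(\<And>x. x \<in> A \<Longrightarrow> finsupp (f x)) \<Longrightarrow> F (sum f A) - (\<Sum>x\<in>A. F (f x)) \<in> ?J"
    proof (induction A rule: infinite_finite_induct)
      case (infinite A) then show ?case using F0 by (simp only: sum.infinite[OF infinite(1)] diff_zero)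
    next
      case empty then show ?case using F0 by (simp only: sum.empty diff_zero)
    next
      case (insert x A)
      have f: "finsupp (f x)" "finsupp (sum f A)" using insert.prems by (auto intro: finsupp_sum)
      have "F (f x + sum f A) - (F (f x) + F (sum f A)) \<in> ?J" by (rule qC[OF f])
      moreover have "(F (f x) + F (sum f A)) - (F (f x) + (\<Sum>x\<in>A. F (f x))) \<in> ?J"
      proof -
        have "F (sum f A) - (\<Sum>x\<in>A. F (f x)) \<in> ?J" using insert.prems by (intro insert.IH) auto
        then show ?thesis by (simp only: add_diff_cancel_left)
      qed
      ultimately show ?case unfolding sum.insert[OF insert.hyps] by (rule I_trans)
    qed
  qed
  have fg: "\<And>a b. finsupp (st_mult id p1 (st_gen a) (st_gen b) :: 'g1 list \<Rightarrow> 'k)"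
    by (intro Id.finsupp_stm finsupp_gen)
  have fs: "\<And>a b. finsupp (st_smul id (c a b) (st_mult id p1 (st_gen a) (st_gen b)))"
    unfolding st_smul_def by (rule finsupp_scale) (rule fg)
  define R where "R = (\<Sum>a\<in>UNIV. \<Sum>b\<in>UNIV. st_smul id (c a b) (st_mult id p1 (st_gen a) (st_gen b)))"
  have fR: "finsupp R" unfolding R_def by (intro finsupp_sum fs)
  have "F R - F 0 \<in> ?J" using qB[OF fR finsupp_zero] rel by (simp add: R_def)
  then have FR: "F R \<in> ?J" using F0 st_ideal.add[of "F R - F 0" \<sigma> p2 G2 "F 0"] by simp
  have c1: "F R - (\<Sum>a\<in>UNIV. \<Sum>b\<in>UNIV. F (st_smul id (c a b) (st_mult id p1 (st_gen a) (st_gen b)))) \<in> ?J"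
    unfolding R_def
    by (rule I_trans[OF Fsum I_sum_cong], intro finsupp_sum fs, rule Fsum, rule fs)
  have c2: "(\<Sum>a\<in>UNIV. \<Sum>b\<in>UNIV. F (st_smul id (c a b) (st_mult id p1 (st_gen a) (st_gen b))))
     - (\<Sum>a\<in>UNIV. \<Sum>b\<in>UNIV. st_smul sc (c a b) (st_mult \<sigma> p2 (X a) (X b))) \<in> ?J"
  proof (intro I_sum_cong)
    fix a b
    have "F (st_smul id (c a b) (st_mult id p1 (st_gen a) (st_gen b)))
       - st_smul sc (c a b) (F (st_mult id p1 (st_gen a) (st_gen b))) \<in> ?J" by (rule qD[OF fg])
    moreover have "st_smul sc (c a b) (F (st_mult id p1 (st_gen a) (st_gen b)))
       - st_smul sc (c a b) (st_mult \<sigma> p2 (X a) (X b)) \<in> ?J"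
    proof (rule I_smul_cong, rule I_trans[OF qE[OF finsupp_gen finsupp_gen]])
      show "st_mult \<sigma> p2 (F (st_gen a)) (F (st_gen b)) - st_mult \<sigma> p2 (X a) (X b) \<in> ?J"
        using FX by (intro I_mult_cong qA finsupp_gen fX) auto
    qed
    ultimately show "F (st_smul id (c a b) (st_mult id p1 (st_gen a) (st_gen b)))
       - st_smul sc (c a b) (st_mult \<sigma> p2 (X a) (X b)) \<in> ?J" by (rule I_trans)
  qed
  show ?thesis by (rule I_sub[OF FR I_trans[OF c1 c2]])
qed

end


lemma sum4_swap: "(\<Sum>a\<in>A. \<Sum>b\<in>B. \<Sum>i\<in>I. \<Sum>j\<in>J. f a b i j) = (\<Sum>i\<in>I. \<Sum>j\<in>J. \<Sum>a\<in>A. \<Sum>b\<in>B. (f a b i j :: 'r::comm_monoid_add))"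
proof -
  have "(\<Sum>a\<in>A. \<Sum>b\<in>B. \<Sum>i\<in>I. \<Sum>j\<in>J. f a b i j) = (\<Sum>a\<in>A. \<Sum>i\<in>I. \<Sum>b\<in>B. \<Sum>j\<in>J. f a b i j)"
    by (rule sum.cong[OF refl], rule sum.swap)
  also have "\<dots> = (\<Sum>i\<in>I. \<Sum>a\<in>A. \<Sum>b\<in>B. \<Sum>j\<in>J. f a b i j)" by (rule sum.swap)
  also have "\<dots> = (\<Sum>i\<in>I. \<Sum>a\<in>A. \<Sum>j\<in>J. \<Sum>b\<in>B. f a b i j)"
    by (rule sum.cong[OF refl], rule sum.cong[OF refl], rule sum.swap)
  also have "\<dots> = (\<Sum>i\<in>I. \<Sum>j\<in>J. \<Sum>a\<in>A. \<Sum>b\<in>B. f a b i j)"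
    by (rule sum.cong[OF refl], rule sum.swap)
  finally show ?thesis .
qed

lemma delta2: "finite A \<Longrightarrow> finite B \<Longrightarrow> c \<in> A \<Longrightarrow> d \<in> B \<Longrightarrow>
  (\<Sum>a\<in>A. \<Sum>b\<in>B. (if a = c \<and> b = d then f a b else 0)) = (f c d :: 'r::comm_monoid_add)"
proof -
  assume f: "finite A" "finite B" "c \<in> A" "d \<in> B"
  have "\<And>a. (\<Sum>b\<in>B. (if a = c \<and> b = d then f a b else 0)) = (if a = c then f a d else 0)"
    using f by (simp add: sum.delta')
  then show ?thesis using f by (simp add: sum.delta')
qed

lemma mult_if01: "(x::'a::ring_1) * (if P then 1 else 0) = (if P then x else 0)" by simp

lemma sgnb_comm: "sgnb b * x = x * (sgnb b :: 'r::ring_1)" by (cases b) simp_all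
lemma sgnb_sq[simp]: "sgnb b * (sgnb b * x) = (x :: 'r::ring_1)" by (cases b) simp_all

lemma Sop_par: assumes "even_idempotent p B" "Sop B a b c d \<noteq> 0"
  shows "(p a \<noteq> p b) = (p c \<noteq> p d)"
proof (cases "a = c \<and> b = d")
  case False then have "B a b c d \<noteq> 0" using assms(2) by (auto simp: Sop_def)
  then show ?thesis using assms(1) unfolding even_idempotent_def by blast
qed auto

lemma idem_S: assumes "even_idempotent p B"
  shows "(\<Sum>a\<in>UNIV. \<Sum>b\<in>UNIV. B x y a b * Sop B a b c d) = 0"
proof -
  have "(\<Sum>a\<in>UNIV. \<Sum>b\<in>UNIV. B x y a b * Sop B a b c d)
     = (\<Sum>a\<in>UNIV. \<Sum>b\<in>UNIV. (if a = c \<and> b = d then B x y a b else 0)) - (\<Sum>a\<in>UNIV. \<Sum>b\<in>UNIV. B x y a b * B a b c d)"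
  proof -
    have "\<And>a b. B x y a b * Sop B a b c d = (if a = c \<and> b = d then B x y a b else 0) - B x y a b * B a b c d"
      by (simp add: Sop_def right_diff_distrib)
    then show ?thesis by (simp add: sum_subtractf)
  qed
  also have "\<dots> = B x y c d - B x y c d"
    using assms unfolding even_idempotent_def by (subst delta2) auto
  finally show ?thesis by simp
qed

context SA
begin

lemma sc_sgnb_mult: "sc (sgnb b * x) = sgnb b * sc x" by (simp add: sc_mult)
lemma sc3: "sc x * m * sc y = m * sc (x * y)"
  by (metis mult.assoc sc_central sc_mult)

lemma gen_len1: "T.len1 (st_gen g)" by (simp add: T.len1_def st_gen_def)

lemma gengen: "st_mult \<sigma> p (st_gen a) (st_gen b) w = (if w = [a, b] then 1 else 0)"
proof (cases w)
  case Nil then show ?thesis by (simp add: st_gen_def)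
next
  case (Cons c w') then show ?thesis
    unfolding Cons T.stm_len1_Cons[OF gen_len1] by (auto simp: st_gen_def)
qed

lemma relC_val:
  fixes C :: "'g::finite \<Rightarrow> 'g \<Rightarrow> 'k"
  shows "(\<Sum>a\<in>UNIV. \<Sum>b\<in>UNIV. st_smul sc (C a b) (st_mult \<sigma> p (st_gen a) (st_gen b))) w
     = (if length w = 2 then sc (C (w ! 0) (w ! 1)) else 0)"
proof -
  have e: "(\<Sum>a\<in>UNIV. \<Sum>b\<in>UNIV. st_smul sc (C a b) (st_mult \<sigma> p (st_gen a) (st_gen b))) w
     = (\<Sum>a\<in>UNIV. \<Sum>b\<in>UNIV. (if w = [a, b] then sc (C a b) else 0))"
    by (simp add: sum_fun_apply st_smul_def gengen mult_if01)
  show ?thesis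
  proof (cases "length w = 2")
    case True
    then obtain c d where w: "w = [c, d]"
      by (metis (no_types, opaque_lifting) One_nat_def Suc_length_conv length_0_conv numeral_2_eq_2)
    have "(\<Sum>a\<in>UNIV. \<Sum>b\<in>UNIV. (if w = [a, b] then sc (C a b) else 0)) = sc (C c d)"
      unfolding w using delta2[of UNIV UNIV c d "\<lambda>a b. sc (C a b)"] by (simp add: eq_commute conj_commute)
    then show ?thesis using e w by simp
  next
    case False
    then have "\<And>a b. w \<noteq> [a, b]" by auto
    then show ?thesis using e False by simp
  qed
qed

lemma ZZ_val:
  fixes z :: "'g1 \<Rightarrow> 'g2 \<Rightarrow> 'r"
  shows "st_mult \<sigma> p (Zf z a) (Zf z b) w = (if length w = 2 then z a (w ! 0) * T.tw (p (w ! 0)) (z b (w ! 1)) else 0)"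
proof (cases w)
  case Nil then show ?thesis by (simp add: T.stm_len1_Nil[OF Zf_len1])
next
  case (Cons c w')
  show ?thesis
  proof (cases "length w' = 1")
    case True
    then obtain d where "w' = [d]" by (metis One_nat_def length_0_conv length_Suc_conv)
    then show ?thesis using Cons by (simp add: T.stm_len1_Cons[OF Zf_len1])
  next
    case False then show ?thesis using Cons by (simp add: T.stm_len1_Cons[OF Zf_len1] Zf_def)
  qed
qed

lemma Esum_val:
  fixes z :: "'g1::finite \<Rightarrow> 'g2 \<Rightarrow> 'r" and C :: "'g1 \<Rightarrow> 'g1 \<Rightarrow> 'k"
  shows "(\<Sum>a\<in>UNIV. \<Sum>b\<in>UNIV. st_smul sc (C a b) (st_mult \<sigma> p (Zf z a) (Zf z b))) w
     = (if length w = 2 then (\<Sum>a\<in>UNIV. \<Sum>b\<in>UNIV. sc (C a b) * (z a (w ! 0) * T.tw (p (w ! 0)) (z b (w ! 1)))) else 0)"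
  by (simp add: sum_fun_apply st_smul_def ZZ_val)

lemma Fm_rel:
  fixes p2 :: "'g2 \<Rightarrow> bool" and z :: "'g1::finite \<Rightarrow> 'g2 \<Rightarrow> 'r" and C :: "'g1 \<Rightarrow> 'g1 \<Rightarrow> 'k"
  assumes fin2: "finite (UNIV :: 'g2 set)"
  shows "Fm p2 z (\<Sum>a\<in>UNIV. \<Sum>b\<in>UNIV. st_smul id (C a b) (st_mult id p1 (st_gen a) (st_gen b)))
     = (\<Sum>a\<in>UNIV. \<Sum>b\<in>UNIV. st_smul sc (C a b) (st_mult \<sigma> p2 (Zf z a) (Zf z b)))"
proof -
  have fg: "\<And>a b. finsupp (st_mult id p1 (st_gen a) (st_gen b) :: 'g1 list \<Rightarrow> 'k)"
    by (intro Id.finsupp_stm finsupp_gen)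
  have fs: "\<And>a b. finsupp (st_smul id (C a b) (st_mult id p1 (st_gen a) (st_gen b)))"
    unfolding st_smul_def by (rule finsupp_scale) (rule fg)
  have fs2: "\<And>a. finsupp (\<Sum>b\<in>UNIV. st_smul id (C a b) (st_mult id p1 (st_gen a) (st_gen b)))"
    by (intro finsupp_sum fs)
  show ?thesis
    by (simp add: Fm_sum[OF fs2] Fm_sum[OF fs] Fm_smul[OF fg] Fm_mult[OF fin2] Fm_gen)
qed

lemma Zf_finsupp: "finite (UNIV :: 'g2 set) \<Longrightarrow> finsupp (Zf z a :: 'g2 list \<Rightarrow> 'r)"
  by (rule finsupp_len[of _ 1]) (auto simp: Zf_def split: if_splits)

end


lemma sum_pairs: "(\<Sum>u\<in>(UNIV :: ('a::finite \<times> 'b::finite) set). f u) = (\<Sum>a\<in>UNIV. \<Sum>b\<in>UNIV. f (a, b))"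
  by (simp add: sum.cartesian_product UNIV_Times_UNIV[symmetric] del: UNIV_Times_UNIV)

lemma len2: "length w = 2 \<Longrightarrow> \<exists>c d. w = [c, d]"
  by (metis (no_types, opaque_lifting) One_nat_def Suc_length_conv length_0_conv numeral_2_eq_2)

context SA
begin

lemma sc_sgnb2: "sc (sgnb b * x) * sc (sgnb b * y) = sc (x * y)"
  by (cases b) (simp_all add: sc_mult[symmetric])

lemma Xsum_eq:
  fixes M :: "'i \<Rightarrow> 'j::finite \<Rightarrow> 'r"
  shows "(\<Sum>a\<in>UNIV. st_mult \<sigma> l (st_scal (M i a)) (st_gen a)) = Zf M i"
proof (rule ext)
  fix w
  have "(\<Sum>a\<in>UNIV. st_mult \<sigma> l (st_scal (M i a)) (st_gen a)) w = (\<Sum>a\<in>UNIV. if w = [a] then M i a else 0)"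
    by (simp add: sum_fun_apply T.stm_scal_left st_gen_def mult_if01)
  also have "\<dots> = Zf M i w"
  proof (cases "length w = 1")
    case True then obtain a0 where w: "w = [a0]" by (metis One_nat_def length_0_conv length_Suc_conv)
    show ?thesis unfolding w by (simp add: sum.delta sum.delta' eq_commute)
  next
    case False then have "\<And>a. w \<noteq> [a]" by auto
    then show ?thesis using False by (simp add: Zf_def)
  qed
  finally show "(\<Sum>a\<in>UNIV. st_mult \<sigma> l (st_scal (M i a)) (st_gen a)) w = Zf M i w" .
qed

lemma partX:
  fixes B :: "'i::finite \<Rightarrow> 'i \<Rightarrow> 'i \<Rightarrow> 'i \<Rightarrow> 'k" and Bt :: "'j::finite \<Rightarrow> 'j \<Rightarrow> 'j \<Rightarrow> 'j \<Rightarrow> 'k"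
    and k :: "'i \<Rightarrow> bool" and l :: "'j \<Rightarrow> bool" and M :: "'i \<Rightarrow> 'j \<Rightarrow> 'r"
  assumes eB: "even_idempotent k B" and eBt: "even_idempotent l Bt"
    and hM: "\<forall>i a. homog Ev Od (k i \<noteq> l a) (M i a)"
  shows "(\<forall>s t c d. (\<Sum>i\<in>UNIV. \<Sum>j\<in>UNIV. \<Sum>a\<in>UNIV. \<Sum>b\<in>UNIV.
              sgnb ((k i \<noteq> l a) \<and> k j) * sc (B s t i j) * M i a * M j b * sc (Sop Bt a b c d)) = 0)
          \<longleftrightarrow>
          (\<exists>F. qa_morphism k (st_ideal id k (X_rels id id k B)) sc Ev Od l
                 (st_ideal \<sigma> l (X_rels sc \<sigma> l Bt)) F \<and>
               (\<forall>i. F (st_gen i) - (\<Sum>a\<in>UNIV. st_mult \<sigma> l (st_scal (M i a)) (st_gen a))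
                      \<in> st_ideal \<sigma> l (X_rels sc \<sigma> l Bt)))"
proof -
  let ?J = "st_ideal \<sigma> l (X_rels sc \<sigma> l Bt)"
  define Cs where "Cs s t i j = sgnb (k i \<and> k j) * B s t i j" for s t i j
  define Ct where "Ct s t a b = sgnb (l a \<and> l b) * Bt s t a b" for s t a b
  define E where "E s t = (\<Sum>i\<in>UNIV. \<Sum>j\<in>UNIV. st_smul sc (Cs s t i j) (st_mult \<sigma> l (Zf M i) (Zf M j)))" for s t
  define e where "e s t a b = (\<Sum>i\<in>UNIV. \<Sum>j\<in>UNIV. sc (Cs s t i j) * (M i a * T.tw (l a) (M j b)))" for s t a b
  define D where "D v a b = sgnb (l a \<and> l b) * Sop Bt a b (fst v) (snd v)" for v :: "'j \<times> 'j" and a b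
  define St where "St s t c d = (\<Sum>i\<in>UNIV. \<Sum>j\<in>UNIV. \<Sum>a\<in>UNIV. \<Sum>b\<in>UNIV.
              sgnb ((k i \<noteq> l a) \<and> k j) * sc (B s t i j) * M i a * M j b * sc (Sop Bt a b c d))" for s t c d
  have Eval: "E s t w = (if length w = 2 then e s t (w!0) (w!1) else 0)" for s t w
    unfolding E_def e_def by (rule Esum_val)
  have Xr: "X_rels sc \<sigma> l Bt = range (\<lambda>(s,t). \<Sum>a\<in>UNIV. \<Sum>b\<in>UNIV. st_smul sc (Ct s t a b) (st_mult \<sigma> l (st_gen a) (st_gen b)))"
    by (simp add: X_rels_def Ct_def)
  have Xr1: "X_rels id id k B = range (\<lambda>(s,t). \<Sum>i\<in>UNIV. \<Sum>j\<in>UNIV. st_smul id (Cs s t i j) (st_mult id k (st_gen i) (st_gen j)))"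
    by (simp add: X_rels_def Cs_def)
  have key: "(\<Sum>a\<in>UNIV. \<Sum>b\<in>UNIV. e s t a b * sc (D (c, d) a b)) = St s t c d" for s t c d
  proof -
    have "(\<Sum>a\<in>UNIV. \<Sum>b\<in>UNIV. e s t a b * sc (D (c, d) a b)) = (\<Sum>a\<in>UNIV. \<Sum>b\<in>UNIV. \<Sum>i\<in>UNIV. \<Sum>j\<in>UNIV.
        sc (Cs s t i j) * (M i a * T.tw (l a) (M j b)) * sc (D (c, d) a b))"
      by (simp add: e_def sum_distrib_right)
    also have "\<dots> = (\<Sum>i\<in>UNIV. \<Sum>j\<in>UNIV. \<Sum>a\<in>UNIV. \<Sum>b\<in>UNIV.
        sc (Cs s t i j) * (M i a * T.tw (l a) (M j b)) * sc (D (c, d) a b))"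
      by (rule sum4_swap)
    also have "\<dots> = St s t c d" unfolding St_def
    proof (intro sum.cong refl)
      fix i j a b
      have tw: "T.tw (l a) (M j b) = sgnb (l a \<and> (k j \<noteq> l b)) * M j b" using hM by (intro tw_homog) simp
      show "sc (Cs s t i j) * (M i a * T.tw (l a) (M j b)) * sc (D (c, d) a b) =
          sgnb ((k i \<noteq> l a) \<and> k j) * sc (B s t i j) * M i a * M j b * sc (Sop Bt a b c d)"
        unfolding tw Cs_def D_def fst_conv snd_conv
        by (cases "k i"; cases "k j"; cases "l a"; cases "l b") (simp_all add: sc_mult sc_neg mult.assoc)
    qed
    finally show ?thesis .
  qed
  have gensX: "q [] = 0 \<and> (\<forall>a. q [a] = 0) \<and> (\<forall>v. (\<Sum>a\<in>UNIV. \<Sum>b\<in>UNIV. q [a, b] * sc (D v a b)) = 0)"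
    if qX: "q \<in> X_rels sc \<sigma> l Bt" for q
  proof -
    obtain s t where q: "q = (\<Sum>a\<in>UNIV. \<Sum>b\<in>UNIV. st_smul sc (Ct s t a b) (st_mult \<sigma> l (st_gen a) (st_gen b)))"
    proof -
      from qX obtain u where "q = (\<lambda>(s,t). \<Sum>a\<in>UNIV. \<Sum>b\<in>UNIV. st_smul sc (Ct s t a b) (st_mult \<sigma> l (st_gen a) (st_gen b))) u"
        unfolding Xr by blast
      then show ?thesis using that by (cases u) simp
    qed

    have qv: "q w = (if length w = 2 then sc (Ct s t (w!0) (w!1)) else 0)" for w unfolding q by (rule relC_val)
    have "(\<Sum>a\<in>UNIV. \<Sum>b\<in>UNIV. q [a, b] * sc (D v a b)) = 0" for v
    proof -
      have "(\<Sum>a\<in>UNIV. \<Sum>b\<in>UNIV. q [a, b] * sc (D v a b))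
          = (\<Sum>a\<in>UNIV. \<Sum>b\<in>UNIV. sc (Bt s t a b * Sop Bt a b (fst v) (snd v)))"
        by (simp add: qv Ct_def D_def sc_sgnb2)
      also have "\<dots> = sc (\<Sum>a\<in>UNIV. \<Sum>b\<in>UNIV. Bt s t a b * Sop Bt a b (fst v) (snd v))"
        by (simp add: sc_sum)
      also have "\<dots> = 0" by (simp add: idem_S[OF eBt])
      finally show ?thesis .
    qed
    then show ?thesis by (simp add: qv)
  qed
  have parX: "(l a \<noteq> l b) = (l (fst v) \<noteq> l (snd v))" if "D v a b \<noteq> 0" for v a b
  proof -
    from that have "Sop Bt a b (fst v) (snd v) \<noteq> 0" by (simp add: D_def)
    then show ?thesis by (rule Sop_par[OF eBt])
  qed
  have kill: "(\<Sum>a\<in>UNIV. \<Sum>b\<in>UNIV. x [a, b] * sc (D v a b)) = 0" if x: "x \<in> ?J" for x v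
  proof -
    have "x [] = 0 \<and> (\<forall>a. x [a] = 0) \<and> (\<forall>v. (\<Sum>a\<in>UNIV. \<Sum>b\<in>UNIV. x [a, b] * sc (D v a b)) = 0)"
      by (rule T.ideal_kill[where sc = sc and D = D and \<pi> = "\<lambda>v. l (fst v) \<noteq> l (snd v)"])
        (rule sc_central, simp, erule gensX, erule parX, rule x)
    then show ?thesis by blast
  qed
  have comb: "E s t \<in> ?J" if h: "\<forall>c d. St s t c d = 0" for s t
  proof -
    define g where "g u = (\<Sum>a\<in>UNIV. \<Sum>b\<in>UNIV. st_smul sc (Ct (fst u) (snd u) a b) (st_mult \<sigma> l (st_gen a) (st_gen b)))" for u :: "'j \<times> 'j"
    have gv: "g u w = (if length w = 2 then sc (Ct (fst u) (snd u) (w!0) (w!1)) else 0)" for u w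
      unfolding g_def by (rule relC_val)
    have gG: "g u \<in> X_rels sc \<sigma> l Bt" for u unfolding Xr g_def by (rule image_eqI[of _ _ u]) (auto simp: case_prod_beta)
    show ?thesis
    proof (rule T.ideal_comb[where U = UNIV and g = g and r = "\<lambda>u. e s t (fst u) (snd u) * sgnb (l (fst u) \<and> l (snd u))"])
      show "finite (UNIV :: ('j \<times> 'j) set)" by simp
      show "g u \<in> X_rels sc \<sigma> l Bt" if "u \<in> UNIV" for u by (rule gG)
      fix w show "E s t w = (\<Sum>u\<in>UNIV. e s t (fst u) (snd u) * sgnb (l (fst u) \<and> l (snd u)) * g u w)"
      proof (cases "length w = 2")
        case False then show ?thesis by (simp add: Eval gv)
      next
        case True then obtain c d where w: "w = [c, d]" using len2 by blast
        have h2: "(\<Sum>a\<in>UNIV. \<Sum>b\<in>UNIV. e s t a b * sc (D (c, d) a b)) = 0" using h key by simp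
        have "(\<Sum>a\<in>UNIV. \<Sum>b\<in>UNIV. e s t a b * sc (D (c, d) a b))
            = (\<Sum>a\<in>UNIV. \<Sum>b\<in>UNIV. (if a = c \<and> b = d then e s t a b * sgnb (l a \<and> l b) else 0))
              - (\<Sum>a\<in>UNIV. \<Sum>b\<in>UNIV. e s t a b * sgnb (l a \<and> l b) * sc (Bt a b c d))"
        proof -
          have "\<And>a b. e s t a b * sc (D (c, d) a b) = (if a = c \<and> b = d then e s t a b * sgnb (l a \<and> l b) else 0)
              - e s t a b * sgnb (l a \<and> l b) * sc (Bt a b c d)"
            by (simp add: D_def Sop_def sc_sgnb_mult sc_diff right_diff_distrib mult.assoc)
          then show ?thesis by (simp add: sum_subtractf)
        qed
        also have "\<dots> = e s t c d * sgnb (l c \<and> l d) - (\<Sum>a\<in>UNIV. \<Sum>b\<in>UNIV. e s t a b * sgnb (l a \<and> l b) * sc (Bt a b c d))"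
          by (subst delta2) auto
        finally have h3: "e s t c d * sgnb (l c \<and> l d) = (\<Sum>a\<in>UNIV. \<Sum>b\<in>UNIV. e s t a b * sgnb (l a \<and> l b) * sc (Bt a b c d))"
          using h2 by simp
        have "e s t c d = e s t c d * sgnb (l c \<and> l d) * sgnb (l c \<and> l d)"
          by (cases "l c"; cases "l d") simp_all
        also have "\<dots> = (\<Sum>a\<in>UNIV. \<Sum>b\<in>UNIV. e s t a b * sgnb (l a \<and> l b) * (sc (Bt a b c d) * sgnb (l c \<and> l d)))"
          unfolding h3 by (simp add: sum_distrib_right mult.assoc)
        also have "\<dots> = (\<Sum>u\<in>UNIV. e s t (fst u) (snd u) * sgnb (l (fst u) \<and> l (snd u)) * g u w)"
          by (simp add: sum_pairs gv w Ct_def sc_mult sgnb_comm)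
        finally show ?thesis by (simp add: Eval w)
      qed
    qed
  qed
  show ?thesis
  proof
    assume h: "\<forall>s t c d. (\<Sum>i\<in>UNIV. \<Sum>j\<in>UNIV. \<Sum>a\<in>UNIV. \<Sum>b\<in>UNIV.
              sgnb ((k i \<noteq> l a) \<and> k j) * sc (B s t i j) * M i a * M j b * sc (Sop Bt a b c d)) = 0"
    have hS: "\<forall>c d. St s t c d = 0" for s t using h by (simp add: St_def)
    have gens: "finsupp q \<and> Fm l M q \<in> ?J" if qX: "q \<in> X_rels id id k B" for q
    proof -
      obtain s t where q: "q = (\<Sum>i\<in>UNIV. \<Sum>j\<in>UNIV. st_smul id (Cs s t i j) (st_mult id k (st_gen i) (st_gen j)))"
      proof -
        from qX obtain u where "q = (\<lambda>(s,t). \<Sum>i\<in>UNIV. \<Sum>j\<in>UNIV. st_smul id (Cs s t i j) (st_mult id k (st_gen i) (st_gen j))) u"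
          unfolding Xr1 by blast
        then show ?thesis using that by (cases u) simp
      qed
      have fg: "\<And>a b. finsupp (st_mult id k (st_gen a) (st_gen b) :: 'i list \<Rightarrow> 'k)"
        by (intro Id.finsupp_stm finsupp_gen)
      have fs: "\<And>a b. finsupp (st_smul id (Cs s t a b) (st_mult id k (st_gen a) (st_gen b)))"
        unfolding st_smul_def by (rule finsupp_scale) (rule fg)
      have "finsupp q" unfolding q by (intro finsupp_sum fs)
      moreover have "Fm l M q = E s t" unfolding q E_def by (rule Fm_rel) simp
      moreover have "E s t \<in> ?J" by (rule comb[OF hS])
      ultimately show ?thesis by simp
    qed
    have "qa_morphism k (st_ideal id k (X_rels id id k B)) sc Ev Od l ?J (Fm l M)"
    proof (rule morph_exists)
      show "finite (UNIV :: 'j set)" by simp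
      show "homog Ev Od (k g \<noteq> l h) (M g h)" for g h using hM by simp
      show "finsupp q \<and> Fm l M q \<in> ?J" if "q \<in> X_rels id id k B" for q using gens that by blast
    qed
    moreover have "\<forall>i. Fm l M (st_gen i) - (\<Sum>a\<in>UNIV. st_mult \<sigma> l (st_scal (M i a)) (st_gen a)) \<in> ?J"
      using st_ideal.zero[of \<sigma> l "X_rels sc \<sigma> l Bt"] by (simp only: Fm_gen Xsum_eq diff_self) simp
    ultimately show "\<exists>F. qa_morphism k (st_ideal id k (X_rels id id k B)) sc Ev Od l ?J F \<and>
               (\<forall>i. F (st_gen i) - (\<Sum>a\<in>UNIV. st_mult \<sigma> l (st_scal (M i a)) (st_gen a)) \<in> ?J)" by blast
  next
    assume "\<exists>F. qa_morphism k (st_ideal id k (X_rels id id k B)) sc Ev Od l ?J F \<and>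
               (\<forall>i. F (st_gen i) - (\<Sum>a\<in>UNIV. st_mult \<sigma> l (st_scal (M i a)) (st_gen a)) \<in> ?J)"
    then obtain F where qa: "qa_morphism k (st_ideal id k (X_rels id id k B)) sc Ev Od l ?J F"
      and FX: "\<forall>i. F (st_gen i) - (\<Sum>a\<in>UNIV. st_mult \<sigma> l (st_scal (M i a)) (st_gen a)) \<in> ?J" by blast
    have FX': "\<forall>i. F (st_gen i) - Zf M i \<in> ?J" using FX by (simp only: Xsum_eq) simp
    show "\<forall>s t c d. (\<Sum>i\<in>UNIV. \<Sum>j\<in>UNIV. \<Sum>a\<in>UNIV. \<Sum>b\<in>UNIV.
              sgnb ((k i \<noteq> l a) \<and> k j) * sc (B s t i j) * M i a * M j b * sc (Sop Bt a b c d)) = 0"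
    proof (intro allI)
      fix s t c d
      have rel: "(\<Sum>i\<in>UNIV. \<Sum>j\<in>UNIV. st_smul id (Cs s t i j) (st_mult id k (st_gen i) (st_gen j)))
          \<in> st_ideal id k (X_rels id id k B)"
        by (rule st_ideal.gen) (unfold Xr1, rule image_eqI[of _ _ "(s, t)"], auto)
      have "E s t \<in> ?J" unfolding E_def by (rule morph_rel[OF qa FX' Zf_finsupp[OF finite_UNIV] rel])
      then have "(\<Sum>a\<in>UNIV. \<Sum>b\<in>UNIV. E s t [a, b] * sc (D (c, d) a b)) = 0" by (rule kill)
      then have "St s t c d = 0" using key by (simp add: Eval)
      then show "(\<Sum>i\<in>UNIV. \<Sum>j\<in>UNIV. \<Sum>a\<in>UNIV. \<Sum>b\<in>UNIV.
              sgnb ((k i \<noteq> l a) \<and> k j) * sc (B s t i j) * M i a * M j b * sc (Sop Bt a b c d)) = 0"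
        by (simp add: St_def)
    qed
  qed
qed

lemma if01_mult: "(if P then 1 else 0) * (x::'a::ring_1) = (if P then x else 0)" by simp

lemma Ysum_eq:
  fixes M :: "'i::finite \<Rightarrow> 'j \<Rightarrow> 'r"
  shows "(\<Sum>i\<in>UNIV. st_mult \<sigma> k (st_gen i) (st_scal (M i a))) = Zf (\<lambda>a i. T.tw (k i) (M i a)) a"
proof (rule ext)
  fix w show "(\<Sum>i\<in>UNIV. st_mult \<sigma> k (st_gen i) (st_scal (M i a))) w = Zf (\<lambda>a i. T.tw (k i) (M i a)) a w"
  proof (cases w)
    case Nil then show ?thesis by (simp add: sum_fun_apply st_gen_def)
  next
    case (Cons c w')
    have "(\<Sum>i\<in>UNIV. st_mult \<sigma> k (st_gen i) (st_scal (M i a))) w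
        = (\<Sum>i\<in>UNIV. if c = i then T.tw (k c) (st_scal (M i a) w') else 0)"
      unfolding Cons sum_fun_apply T.stm_len1_Cons[OF gen_len1] by (simp add: st_gen_def if01_mult)
    also have "\<dots> = T.tw (k c) (st_scal (M c a) w')" by (simp add: sum.delta)
    also have "\<dots> = Zf (\<lambda>a i. T.tw (k i) (M i a)) a w"
      using Cons by (cases w') (simp_all add: st_scal_def Zf_def)
    finally show ?thesis .
  qed
qed

lemma partXi:
  fixes B :: "'i::finite \<Rightarrow> 'i \<Rightarrow> 'i \<Rightarrow> 'i \<Rightarrow> 'k" and Bt :: "'j::finite \<Rightarrow> 'j \<Rightarrow> 'j \<Rightarrow> 'j \<Rightarrow> 'k"
    and k :: "'i \<Rightarrow> bool" and l :: "'j \<Rightarrow> bool" and M :: "'i \<Rightarrow> 'j \<Rightarrow> 'r"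
  assumes eB: "even_idempotent k B" and eBt: "even_idempotent l Bt"
    and hM: "\<forall>i a. homog Ev Od (k i \<noteq> l a) (M i a)"
  shows "(\<forall>s t c d. (\<Sum>i\<in>UNIV. \<Sum>j\<in>UNIV. \<Sum>a\<in>UNIV. \<Sum>b\<in>UNIV.
              sgnb ((k i \<noteq> l a) \<and> k j) * sc (B s t i j) * M i a * M j b * sc (Sop Bt a b c d)) = 0)
          \<longleftrightarrow>
          (\<exists>F. qa_morphism l (st_ideal id l (Xi_rels id id l Bt)) sc Ev Od k
                 (st_ideal \<sigma> k (Xi_rels sc \<sigma> k B)) F \<and>
               (\<forall>a. F (st_gen a) - (\<Sum>i\<in>UNIV. st_mult \<sigma> k (st_gen i) (st_scal (M i a)))
                      \<in> st_ideal \<sigma> k (Xi_rels sc \<sigma> k B)))"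
proof -
  let ?J = "st_ideal \<sigma> k (Xi_rels sc \<sigma> k B)"
  define zY where "zY a i = T.tw (k i) (M i a)" for a i
  define Cs where "Cs c d a b = Sop Bt a b c d" for c d a b
  define Ct where "Ct i j s t = Sop B s t i j" for i j s t
  define E where "E c d = (\<Sum>a\<in>UNIV. \<Sum>b\<in>UNIV. st_smul sc (Cs c d a b) (st_mult \<sigma> k (Zf zY a) (Zf zY b)))" for c d
  define e where "e c d i j = (\<Sum>a\<in>UNIV. \<Sum>b\<in>UNIV. sc (Cs c d a b) * (zY a i * T.tw (k i) (zY b j)))" for c d i j
  define D where "D v s t = B (fst v) (snd v) s t" for v :: "'i \<times> 'i" and s t
  define St where "St s t c d = (\<Sum>i\<in>UNIV. \<Sum>j\<in>UNIV. \<Sum>a\<in>UNIV. \<Sum>b\<in>UNIV.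
              sgnb ((k i \<noteq> l a) \<and> k j) * sc (B s t i j) * M i a * M j b * sc (Sop Bt a b c d))" for s t c d
  have hz: "homog Ev Od (l a \<noteq> k i) (zY a i)" for a i
  proof -
    have "homog Ev Od (k i \<noteq> l a) (T.tw (k i) (M i a))" using hM by (intro homog_tw) simp
    moreover have "(k i \<noteq> l a) = (l a \<noteq> k i)" by auto
    ultimately show ?thesis unfolding zY_def by simp
  qed
  have Eval: "E c d w = (if length w = 2 then e c d (w!0) (w!1) else 0)" for c d w
    unfolding E_def e_def by (rule Esum_val)
  have Xr: "Xi_rels sc \<sigma> k B = range (\<lambda>(i,j). \<Sum>s\<in>UNIV. \<Sum>t\<in>UNIV. st_smul sc (Ct i j s t) (st_mult \<sigma> k (st_gen s) (st_gen t)))"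
    by (simp add: Xi_rels_def Ct_def)
  have Xr1: "Xi_rels id id l Bt = range (\<lambda>(c,d). \<Sum>a\<in>UNIV. \<Sum>b\<in>UNIV. st_smul id (Cs c d a b) (st_mult id l (st_gen a) (st_gen b)))"
    by (simp add: Xi_rels_def Cs_def)
  have key: "(\<Sum>i\<in>UNIV. \<Sum>j\<in>UNIV. e c d i j * sc (D (p, q) i j)) = sgnb ((k p \<noteq> k q) \<and> (l c = l d)) * St p q c d" for p q c d
  proof -
    have "(\<Sum>i\<in>UNIV. \<Sum>j\<in>UNIV. e c d i j * sc (D (p, q) i j)) = (\<Sum>i\<in>UNIV. \<Sum>j\<in>UNIV. \<Sum>a\<in>UNIV. \<Sum>b\<in>UNIV.
        sc (Cs c d a b) * (zY a i * T.tw (k i) (zY b j)) * sc (D (p, q) i j))"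
      by (simp add: e_def sum_distrib_right)
    also have "\<dots> = (\<Sum>i\<in>UNIV. \<Sum>j\<in>UNIV. \<Sum>a\<in>UNIV. \<Sum>b\<in>UNIV. sgnb ((k p \<noteq> k q) \<and> (l c = l d)) *
        (sgnb ((k i \<noteq> l a) \<and> k j) * sc (B p q i j) * M i a * M j b * sc (Sop Bt a b c d)))"
    proof (intro sum.cong refl)
      fix i j a b
      show "sc (Cs c d a b) * (zY a i * T.tw (k i) (zY b j)) * sc (D (p, q) i j) = sgnb ((k p \<noteq> k q) \<and> (l c = l d)) *
        (sgnb ((k i \<noteq> l a) \<and> k j) * sc (B p q i j) * M i a * M j b * sc (Sop Bt a b c d))"
      proof (cases "B p q i j = 0 \<or> Sop Bt a b c d = 0")
        case True then show ?thesis by (auto simp: Cs_def D_def)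
      next
        case False
        then have p1: "(k i \<noteq> k j) = (k p \<noteq> k q)" using eB unfolding even_idempotent_def by metis
        have p2: "(l a \<noteq> l b) = (l c \<noteq> l d)" using False Sop_par[OF eBt] by blast
        have kap: "((k p \<noteq> k q) \<and> (l c = l d)) = ((k i \<noteq> k j) \<and> (l a = l b))" using p1 p2 by blast
        have z1: "zY a i = sgnb (k i \<and> (k i \<noteq> l a)) * M i a" unfolding zY_def using hM by (intro tw_homog) simp
        have hb: "homog Ev Od (k j \<noteq> l b) (T.tw (k j) (M j b))" using hM by (intro homog_tw) simp
        have z2: "T.tw (k i) (zY b j) = sgnb (k i \<and> (k j \<noteq> l b)) * (sgnb (k j \<and> (k j \<noteq> l b)) * M j b)"
        proof -
          have t1: "T.tw (k j) (M j b) = sgnb (k j \<and> (k j \<noteq> l b)) * M j b" using hM by (intro tw_homog) simp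
          show ?thesis unfolding zY_def by (subst tw_homog[OF hb]) (simp only: t1)
        qed
        have r1: "sc (Cs c d a b) * (zY a i * T.tw (k i) (zY b j)) * sc (D (p, q) i j)
            = (zY a i * T.tw (k i) (zY b j)) * sc (B p q i j * Sop Bt a b c d)"
          unfolding Cs_def D_def fst_conv snd_conv by (simp add: sc3 mult.commute)
        have r2: "sgnb ((k i \<noteq> l a) \<and> k j) * sc (B p q i j) * M i a * M j b * sc (Sop Bt a b c d)
            = sgnb ((k i \<noteq> l a) \<and> k j) * (M i a * M j b * sc (B p q i j * Sop Bt a b c d))"
          using sc3[of "B p q i j" "M i a * M j b" "Sop Bt a b c d"] by (simp add: mult.assoc)
        show ?thesis unfolding r1 r2 kap unfolding z1 z2
          by (cases "k i"; cases "k j"; cases "l a"; cases "l b") (simp_all add: mult.assoc)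
      qed
    qed
    also have "\<dots> = sgnb ((k p \<noteq> k q) \<and> (l c = l d)) * St p q c d"
      by (simp add: St_def sum_distrib_left)
    finally show ?thesis .
  qed
  have gensX: "q [] = 0 \<and> (\<forall>a. q [a] = 0) \<and> (\<forall>v. (\<Sum>a\<in>UNIV. \<Sum>b\<in>UNIV. q [a, b] * sc (D v a b)) = 0)"
    if qX: "q \<in> Xi_rels sc \<sigma> k B" for q
  proof -
    obtain i j where q: "q = (\<Sum>s\<in>UNIV. \<Sum>t\<in>UNIV. st_smul sc (Ct i j s t) (st_mult \<sigma> k (st_gen s) (st_gen t)))"
    proof -
      from qX obtain u where "q = (\<lambda>(i,j). \<Sum>s\<in>UNIV. \<Sum>t\<in>UNIV. st_smul sc (Ct i j s t) (st_mult \<sigma> k (st_gen s) (st_gen t))) u"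
        unfolding Xr by blast
      then show ?thesis using that by (cases u) simp
    qed
    have qv: "q w = (if length w = 2 then sc (Ct i j (w!0) (w!1)) else 0)" for w unfolding q by (rule relC_val)
    have "(\<Sum>a\<in>UNIV. \<Sum>b\<in>UNIV. q [a, b] * sc (D v a b)) = 0" for v
    proof -
      have "(\<Sum>a\<in>UNIV. \<Sum>b\<in>UNIV. q [a, b] * sc (D v a b))
          = sc (\<Sum>a\<in>UNIV. \<Sum>b\<in>UNIV. B (fst v) (snd v) a b * Sop B a b i j)"
        by (simp add: qv Ct_def D_def sc_sum sc_mult[symmetric] mult.commute)
      also have "\<dots> = 0" by (simp add: idem_S[OF eB])
      finally show ?thesis .
    qed
    then show ?thesis by (simp add: qv)
  qed
  have parX: "(k a \<noteq> k b) = (k (fst v) \<noteq> k (snd v))" if "D v a b \<noteq> 0" for v a b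
    using that eB unfolding D_def even_idempotent_def by metis
  have kill: "(\<Sum>a\<in>UNIV. \<Sum>b\<in>UNIV. x [a, b] * sc (D v a b)) = 0" if x: "x \<in> ?J" for x v
  proof -
    have "x [] = 0 \<and> (\<forall>a. x [a] = 0) \<and> (\<forall>v. (\<Sum>a\<in>UNIV. \<Sum>b\<in>UNIV. x [a, b] * sc (D v a b)) = 0)"
      by (rule T.ideal_kill[where sc = sc and D = D and \<pi> = "\<lambda>v. k (fst v) \<noteq> k (snd v)"])
        (rule sc_central, simp, erule gensX, erule parX, rule x)
    then show ?thesis by blast
  qed
  have comb: "E c d \<in> ?J" if h: "\<forall>p q. St p q c d = 0" for c d
  proof -
    define g where "g u = (\<Sum>s\<in>UNIV. \<Sum>t\<in>UNIV. st_smul sc (Ct (fst u) (snd u) s t) (st_mult \<sigma> k (st_gen s) (st_gen t)))" for u :: "'i \<times> 'i"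
    have gv: "g u w = (if length w = 2 then sc (Ct (fst u) (snd u) (w!0) (w!1)) else 0)" for u w
      unfolding g_def by (rule relC_val)
    have gG: "g u \<in> Xi_rels sc \<sigma> k B" for u unfolding Xr g_def by (rule image_eqI[of _ _ u]) (auto simp: case_prod_beta)
    show ?thesis
    proof (rule T.ideal_comb[where U = UNIV and g = g and r = "\<lambda>u. e c d (fst u) (snd u)"])
      show "finite (UNIV :: ('i \<times> 'i) set)" by simp
      show "g u \<in> Xi_rels sc \<sigma> k B" if "u \<in> UNIV" for u by (rule gG)
      fix w show "E c d w = (\<Sum>u\<in>UNIV. e c d (fst u) (snd u) * g u w)"
      proof (cases "length w = 2")
        case False then show ?thesis by (simp add: Eval gv)
      next
        case True then obtain s t where w: "w = [s, t]" using len2 by blast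
        have h2: "(\<Sum>i\<in>UNIV. \<Sum>j\<in>UNIV. e c d i j * sc (D (s, t) i j)) = 0" using h key by simp
        have "(\<Sum>u\<in>UNIV. e c d (fst u) (snd u) * g u w)
            = (\<Sum>i\<in>UNIV. \<Sum>j\<in>UNIV. e c d i j * sc (Sop B s t i j))"
          by (simp add: sum_pairs gv w Ct_def)
        also have "\<dots> = (\<Sum>i\<in>UNIV. \<Sum>j\<in>UNIV. (if i = s \<and> j = t then e c d i j else 0))
              - (\<Sum>i\<in>UNIV. \<Sum>j\<in>UNIV. e c d i j * sc (D (s, t) i j))"
        proof -
          have "\<And>i j. e c d i j * sc (Sop B s t i j) = (if i = s \<and> j = t then e c d i j else 0)
              - e c d i j * sc (D (s, t) i j)"
            by (auto simp: D_def Sop_def sc_diff right_diff_distrib)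
          then show ?thesis by (simp add: sum_subtractf)
        qed
        also have "\<dots> = e c d s t" using h2 by (subst delta2) auto
        finally show ?thesis by (simp add: Eval w)
      qed
    qed
  qed
  show ?thesis
  proof
    assume h: "\<forall>s t c d. (\<Sum>i\<in>UNIV. \<Sum>j\<in>UNIV. \<Sum>a\<in>UNIV. \<Sum>b\<in>UNIV.
              sgnb ((k i \<noteq> l a) \<and> k j) * sc (B s t i j) * M i a * M j b * sc (Sop Bt a b c d)) = 0"
    have hS: "\<forall>p q. St p q c d = 0" for c d using h by (simp add: St_def)
    have gens: "finsupp q \<and> Fm k zY q \<in> ?J" if qX: "q \<in> Xi_rels id id l Bt" for q
    proof -
      obtain c d where q: "q = (\<Sum>a\<in>UNIV. \<Sum>b\<in>UNIV. st_smul id (Cs c d a b) (st_mult id l (st_gen a) (st_gen b)))"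
      proof -
        from qX obtain u where "q = (\<lambda>(c,d). \<Sum>a\<in>UNIV. \<Sum>b\<in>UNIV. st_smul id (Cs c d a b) (st_mult id l (st_gen a) (st_gen b))) u"
          unfolding Xr1 by blast
        then show ?thesis using that by (cases u) simp
      qed
      have fg: "\<And>a b. finsupp (st_mult id l (st_gen a) (st_gen b) :: 'j list \<Rightarrow> 'k)"
        by (intro Id.finsupp_stm finsupp_gen)
      have fs: "\<And>a b. finsupp (st_smul id (Cs c d a b) (st_mult id l (st_gen a) (st_gen b)))"
        unfolding st_smul_def by (rule finsupp_scale) (rule fg)
      have "finsupp q" unfolding q by (intro finsupp_sum fs)
      moreover have "Fm k zY q = E c d" unfolding q E_def by (rule Fm_rel) simp
      moreover have "E c d \<in> ?J" by (rule comb[OF hS])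
      ultimately show ?thesis by simp
    qed
    have "qa_morphism l (st_ideal id l (Xi_rels id id l Bt)) sc Ev Od k ?J (Fm k zY)"
    proof (rule morph_exists)
      show "finite (UNIV :: 'i set)" by simp
      show "homog Ev Od (l g \<noteq> k h) (zY g h)" for g h by (rule hz)
      show "finsupp q \<and> Fm k zY q \<in> ?J" if "q \<in> Xi_rels id id l Bt" for q using gens that by blast
    qed
    moreover have "\<forall>a. Fm k zY (st_gen a) - (\<Sum>i\<in>UNIV. st_mult \<sigma> k (st_gen i) (st_scal (M i a))) \<in> ?J"
      using st_ideal.zero[of \<sigma> k "Xi_rels sc \<sigma> k B"] unfolding zY_def by (simp only: Fm_gen Ysum_eq diff_self) simp
    ultimately show "\<exists>F. qa_morphism l (st_ideal id l (Xi_rels id id l Bt)) sc Ev Od k ?J F \<and>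
               (\<forall>a. F (st_gen a) - (\<Sum>i\<in>UNIV. st_mult \<sigma> k (st_gen i) (st_scal (M i a))) \<in> ?J)" by blast
  next
    assume "\<exists>F. qa_morphism l (st_ideal id l (Xi_rels id id l Bt)) sc Ev Od k ?J F \<and>
               (\<forall>a. F (st_gen a) - (\<Sum>i\<in>UNIV. st_mult \<sigma> k (st_gen i) (st_scal (M i a))) \<in> ?J)"
    then obtain F where qa: "qa_morphism l (st_ideal id l (Xi_rels id id l Bt)) sc Ev Od k ?J F"
      and FX: "\<forall>a. F (st_gen a) - (\<Sum>i\<in>UNIV. st_mult \<sigma> k (st_gen i) (st_scal (M i a))) \<in> ?J" by blast
    have FX': "\<forall>a. F (st_gen a) - Zf zY a \<in> ?J" using FX unfolding zY_def by (simp only: Ysum_eq) simp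
    show "\<forall>s t c d. (\<Sum>i\<in>UNIV. \<Sum>j\<in>UNIV. \<Sum>a\<in>UNIV. \<Sum>b\<in>UNIV.
              sgnb ((k i \<noteq> l a) \<and> k j) * sc (B s t i j) * M i a * M j b * sc (Sop Bt a b c d)) = 0"
    proof (intro allI)
      fix s t c d
      have rel: "(\<Sum>a\<in>UNIV. \<Sum>b\<in>UNIV. st_smul id (Cs c d a b) (st_mult id l (st_gen a) (st_gen b)))
          \<in> st_ideal id l (Xi_rels id id l Bt)"
        by (rule st_ideal.gen) (unfold Xr1, rule image_eqI[of _ _ "(c, d)"], auto)
      have "E c d \<in> ?J" unfolding E_def by (rule morph_rel[OF qa FX' Zf_finsupp[OF finite_UNIV] rel])
      then have "(\<Sum>i\<in>UNIV. \<Sum>j\<in>UNIV. E c d [i, j] * sc (D (s, t) i j)) = 0" by (rule kill)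
      then have "sgnb ((k s \<noteq> k t) \<and> (l c = l d)) * St s t c d = 0" using key by (simp add: Eval)
      then have "St s t c d = 0" using sgnb_sq[of "(k s \<noteq> k t) \<and> (l c = l d)" "St s t c d"] by simp
      then show "(\<Sum>i\<in>UNIV. \<Sum>j\<in>UNIV. \<Sum>a\<in>UNIV. \<Sum>b\<in>UNIV.
              sgnb ((k i \<noteq> l a) \<and> k j) * sc (B s t i j) * M i a * M j b * sc (Sop Bt a b c d)) = 0"
        by (simp add: St_def)
    qed
  qed
qed

end

theorem mainTheorem14:
  fixes B :: "'i::finite \<Rightarrow> 'i \<Rightarrow> 'i \<Rightarrow> 'i \<Rightarrow> 'k::field"
    and Bt :: "'j::finite \<Rightarrow> 'j \<Rightarrow> 'j \<Rightarrow> 'j \<Rightarrow> 'k"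
    and k :: "'i \<Rightarrow> bool" and l :: "'j \<Rightarrow> bool"
    and sc :: "'k \<Rightarrow> 'r::ring_1" and Ev Od :: "'r set"
    and M :: "'i \<Rightarrow> 'j \<Rightarrow> 'r"
  assumes "infinite (UNIV :: 'k set)" and "(2::'k) \<noteq> 0"
    and "even_idempotent k B" and "even_idempotent l Bt"
    and "super_algebra sc Ev Od"
    and "\<forall>i a. homog Ev Od (k i \<noteq> l a) (M i a)"
  shows "((\<forall>s t c d. (\<Sum>i\<in>UNIV. \<Sum>j\<in>UNIV. \<Sum>a\<in>UNIV. \<Sum>b\<in>UNIV.
              sgnb ((k i \<noteq> l a) \<and> k j) * sc (B s t i j) * M i a * M j b * sc (Sop Bt a b c d)) = 0)
          \<longleftrightarrow>
          (\<exists>F. qa_morphism k (st_ideal id k (X_rels id id k B)) sc Ev Od l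
                 (st_ideal (gaut Ev Od) l (X_rels sc (gaut Ev Od) l Bt)) F \<and>
               (\<forall>i. F (st_gen i) - (\<Sum>a\<in>UNIV. st_mult (gaut Ev Od) l (st_scal (M i a)) (st_gen a))
                      \<in> st_ideal (gaut Ev Od) l (X_rels sc (gaut Ev Od) l Bt))))
       \<and> ((\<forall>s t c d. (\<Sum>i\<in>UNIV. \<Sum>j\<in>UNIV. \<Sum>a\<in>UNIV. \<Sum>b\<in>UNIV.
              sgnb ((k i \<noteq> l a) \<and> k j) * sc (B s t i j) * M i a * M j b * sc (Sop Bt a b c d)) = 0)
          \<longleftrightarrow>
          (\<exists>F. qa_morphism l (st_ideal id l (Xi_rels id id l Bt)) sc Ev Od k
                 (st_ideal (gaut Ev Od) k (Xi_rels sc (gaut Ev Od) k B)) F \<and>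
               (\<forall>a. F (st_gen a) - (\<Sum>i\<in>UNIV. st_mult (gaut Ev Od) k (st_gen i) (st_scal (M i a)))
                      \<in> st_ideal (gaut Ev Od) k (Xi_rels sc (gaut Ev Od) k B))))"
proof -
  interpret S: SA sc Ev Od by unfold_locales (rule assms(5))
  show ?thesis
    by (rule conjI[OF S.partX[OF assms(3) assms(4) assms(6)] S.partXi[OF assms(3) assms(4) assms(6)]])
qed

end
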